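(* Let $H$ be a crossed group-cograded weak Hopf quasigroup over $G$ with bijective antipode and crossing $(\pi_q)_{q\in G}$, let $p,q\in G$ and $(V,\rho^V)\in\mathcal{YDWQ}(H)_p$. Let ${}^qV$ be the vector space $V$, whose element corresponding to $v\in V$ is written ${}^qv$, with structures ${}^qv\cdot h={}^q\big(v\cdot\pi_{q^{-1}}(h)\big)$ for $h\in H_{qpq^{-1}}$, and $\rho_r^{{}^qV}({}^qv)={}^q(v_{(0)})\otimes\pi_q(v_{(1,q^{-1}rq)})$ for $r\in G$. Then ${}^qV\in\mathcal{YDWQ}(H)_{qpq^{-1}}$.
   Context: Let $k$ be a field and $G$ a group with identity $e$. A group-cograded weak Hopf quasigroup $H$ over $G$ consists of a family $(H_p)_{p\in G}$ of unital, not necessarily associative, $k$-algebras with units $1_p$; coassociative linear maps $\Delta_{p,q}:H_{pq}\to H_p\otimes H_q$, written $\Delta_{p,q}(h)=h_{(1,p)}\otimes h_{(2,q)}$ (iterated: $h_{(1,p)}\otimes h_{(2,q)}\otimes h_{(3,r)}$, etc.); and a counit $\epsilon:H_e\to k$ with $(\epsilon\otimes\mathrm{id})\Delta_{e,p}=\mathrm{id}=(\mathrm{id}\otimes\epsilon)\Delta_{p,e}$; such that: (1) each $\Delta_{p,q}$ is multiplicative and $(\Delta_{p,q}\otimes\mathrm{id})\Delta_{pq,r}(1_{pqr})=(\Delta_{p,q}(1_{pq})\otimes 1_r)(1_p\otimes\Delta_{q,r}(1_{qr}))=(1_p\otimes\Delta_{q,r}(1_{qr}))(\Delta_{p,q}(1_{pq})\otimes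 1_r)$; (2) $\epsilon((gh)l)=\epsilon(g(hl))=\epsilon(gh_{(2,e)})\epsilon(h_{(1,e)}l)=\epsilon(gh_{(1,e)})\epsilon(h_{(2,e)}l)$ for $g,h,l\in H_e$; (3) writing $\Delta_{p,q}(1_{pq})=1_{(1,p)}\otimes 1_{(2,q)}$ and $\epsilon^t_p(h)=\epsilon(1_{(1,e)}h)1_{(2,p)}$, $\epsilon^s_p(h)=1_{(1,p)}\epsilon(h1_{(2,e)})$ for $h\in H_e$, there are linear maps $S_p:H_p\to H_{p^{-1}}$ with $S_p(h)=S_p(h_{(1,p)})\epsilon^t_{p^{-1}}(h_{(2,e)})=\epsilon^s_{p^{-1}}(h_{(1,e)})S_p(h_{(2,p)})$ for $h\in H_p$ and, for $h\in H_e$, $g\in H_p$: $S_{p^{-1}}(h_{(1,p^{-1})})(h_{(2,p)}g)=\epsilon^s_p(h)g$, $h_{(1,p)}(S_{p^{-1}}(h_{(2,p^{-1})})g)=\epsilon^t_p(h)g$, $(gh_{(1,p)})S_{p^{-1}}(h_{(2,p^{-1})})=g\epsilon^t_p(h)$, $(gS_{p^{-1}}(h_{(1,p^{-1})}))h_{(2,p)}=g\epsilon^s_p(h)$. It is crossed if equipped with algebra isomorphisms $\pi_p:H_q\to H_{pqp^{-1}}$ with $(\pi_p\otimes\pi_p)\Delta_{q,r}=\Delta_{pqp^{-1},prp^{-1}}\pi_p$, $\epsilon\pi_p=\epsilon$, $\pi_{pq}=\pi_p\pi_q$. The antipode is bijective if every $S_p$ is bijective. For fixed $p\in G$, a right-right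 $p$-Yetter-Drinfeld weak quasimodule over $H$ is a vector space $V$ with a bilinear map $V\times H_p\to V$, $(v,h)\mapsto v\cdot h$, and linear maps $\rho_r:V\to V\otimes H_r$ ($r\in G$), $\rho_r(v)=v_{(0)}\otimes v_{(1,r)}$, such that: (i) $v\cdot 1_p=v$, and for $h\in H_e$: $(v\cdot h_{(1,p)})\cdot S_{p^{-1}}(h_{(2,p^{-1})})=v\cdot\epsilon^t_p(h)$ and $(v\cdot S_{p^{-1}}(h_{(1,p^{-1})}))\cdot h_{(2,p)}=v\cdot\epsilon^s_p(h)$; (ii) $(\rho_{r_1}\otimes\mathrm{id}_{H_{r_2}})\rho_{r_2}=(\mathrm{id}_V\otimes\Delta_{r_1,r_2})\rho_{r_1r_2}$ and $(\mathrm{id}_V\otimes\epsilon)\rho_e=\mathrm{id}_V$; (iii) for all $v\in V$, $r\in G$, $h\in H_p$, $g,l\in H_r$: $\rho_r(v\cdot h)=v_{(0)}\cdot h_{(2,p)}\otimes S_{r^{-1}}(\pi_{p^{-1}}(h_{(1,pr^{-1}p^{-1})}))\,(v_{(1,r)}h_{(3,r)})$, $v_{(0)}\otimes(gl)v_{(1,r)}=v_{(0)}\otimes g(lv_{(1,r)})$, and $v_{(0)}\otimes(gv_{(1,r)})l=v_{(0)}\otimes g(v_{(1,r)}l)$. Morphisms are $H_p$-linear maps $f$ with $\rho^W_r f=(f\otimes\mathrm{id})\rho^V_r$ for all $r$. These form the category $\mathcal{YDWQ}(H)_p$. *)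

theory Defs
  imports Main "HOL.Vector_Spaces"
begin

text \<open>The group G is a type
 'g of class group_add (NOT assumed commutative); the group law is written +, identity 0,
 inverse uminus. All the algebras H_p live as subspaces Hc p of one ambient k-vector space
 'h with scalar multiplication scH; every structure map carries its grade index(es), so
 overlaps of the Hc p inside 'h are irrelevant. Tensors are represented by finite lists of
 elementary tensors (Sweedler sums); two such lists are equal as tensors iff all
 (bi/tri)linear forms agree on them (dual of the tensor product separates points).\<close>

definition lin_fun :: "('k::field \<Rightarrow> 'a::ab_group_add \<Rightarrow> 'a) \<Rightarrow> 'a set \<Rightarrow> ('a \<Rightarrow> 'k) \<Rightarrow> bool" where
  "lin_fun sA A f \<longleftrightarrow> (\<forall>x\<in>A. \<forall>y\<in>A. f (x + y) = f x + f y) \<and> (\<forall>c. \<forall>x\<in>A. f (sA c x) = c * f x)"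

definition lin_map :: "('k::field \<Rightarrow> 'a::ab_group_add \<Rightarrow> 'a) \<Rightarrow> 'a set \<Rightarrow>
    ('k \<Rightarrow> 'b::ab_group_add \<Rightarrow> 'b) \<Rightarrow> 'b set \<Rightarrow> ('a \<Rightarrow> 'b) \<Rightarrow> bool" where
  "lin_map sA A sB B f \<longleftrightarrow> (\<forall>x\<in>A. f x \<in> B) \<and> (\<forall>x\<in>A. \<forall>y\<in>A. f (x + y) = f x + f y)
     \<and> (\<forall>c. \<forall>x\<in>A. f (sA c x) = sB c (f x))"

definition teq2 :: "('k::field \<Rightarrow> 'a::ab_group_add \<Rightarrow> 'a) \<Rightarrow> 'a set \<Rightarrow>
    ('k \<Rightarrow> 'b::ab_group_add \<Rightarrow> 'b) \<Rightarrow> 'b set \<Rightarrow> ('a \<times> 'b) list \<Rightarrow> ('a \<times> 'b) list \<Rightarrow> bool" where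
  "teq2 sA A sB B xs ys \<longleftrightarrow>
     (\<forall>\<phi> :: 'a \<Rightarrow> 'b \<Rightarrow> 'k.
        (\<forall>b\<in>B. lin_fun sA A (\<lambda>a. \<phi> a b)) \<and> (\<forall>a\<in>A. lin_fun sB B (\<phi> a)) \<longrightarrow>
        sum_list (map (\<lambda>(a, b). \<phi> a b) xs) = sum_list (map (\<lambda>(a, b). \<phi> a b) ys))"

definition teq3 :: "('k::field \<Rightarrow> 'a::ab_group_add \<Rightarrow> 'a) \<Rightarrow> 'a set \<Rightarrow>
    ('k \<Rightarrow> 'b::ab_group_add \<Rightarrow> 'b) \<Rightarrow> 'b set \<Rightarrow> ('k \<Rightarrow> 'c::ab_group_add \<Rightarrow> 'c) \<Rightarrow> 'c set \<Rightarrow>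
    ('a \<times> 'b \<times> 'c) list \<Rightarrow> ('a \<times> 'b \<times> 'c) list \<Rightarrow> bool" where
  "teq3 sA A sB B sC C xs ys \<longleftrightarrow>
     (\<forall>\<phi> :: 'a \<Rightarrow> 'b \<Rightarrow> 'c \<Rightarrow> 'k.
        (\<forall>b\<in>B. \<forall>c\<in>C. lin_fun sA A (\<lambda>a. \<phi> a b c)) \<and> (\<forall>a\<in>A. \<forall>c\<in>C. lin_fun sB B (\<lambda>b. \<phi> a b c))
        \<and> (\<forall>a\<in>A. \<forall>b\<in>B. lin_fun sC C (\<phi> a b)) \<longrightarrow>
        sum_list (map (\<lambda>(a, b, c). \<phi> a b c) xs) = sum_list (map (\<lambda>(a, b, c). \<phi> a b c) ys))"

definition tlin :: "('k::field \<Rightarrow> 'a::ab_group_add \<Rightarrow> 'a) \<Rightarrow> 'a set \<Rightarrow>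
    ('k \<Rightarrow> 'b::ab_group_add \<Rightarrow> 'b) \<Rightarrow> 'b set \<Rightarrow> ('k \<Rightarrow> 'c::ab_group_add \<Rightarrow> 'c) \<Rightarrow> 'c set \<Rightarrow>
    ('a \<Rightarrow> ('b \<times> 'c) list) \<Rightarrow> bool" where
  "tlin sA A sB B sC C F \<longleftrightarrow>
     (\<forall>x\<in>A. set (F x) \<subseteq> B \<times> C) \<and>
     (\<forall>x\<in>A. \<forall>y\<in>A. teq2 sB B sC C (F (x + y)) (F x @ F y)) \<and>
     (\<forall>c. \<forall>x\<in>A. teq2 sB B sC C (F (sA c x)) (map (\<lambda>(b, d). (sB c b, d)) (F x)))"

definition delta3 :: "('g::group_add \<Rightarrow> 'g \<Rightarrow> 'h \<Rightarrow> ('h \<times> 'h) list) \<Rightarrow> 'g \<Rightarrow> 'g \<Rightarrow> 'g \<Rightarrow> 'h \<Rightarrow> ('h \<times> 'h \<times> 'h) list" where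
  "delta3 Dl p q r h = [(a, b, z). (x, z) \<leftarrow> Dl (p + q) r h, (a, b) \<leftarrow> Dl p q x]"

definition epst :: "('k::field \<Rightarrow> 'h::ab_group_add \<Rightarrow> 'h) \<Rightarrow> ('g::group_add \<Rightarrow> 'h \<Rightarrow> 'h \<Rightarrow> 'h) \<Rightarrow>
    ('g \<Rightarrow> 'h) \<Rightarrow> ('g \<Rightarrow> 'g \<Rightarrow> 'h \<Rightarrow> ('h \<times> 'h) list) \<Rightarrow> ('h \<Rightarrow> 'k) \<Rightarrow> 'g \<Rightarrow> 'h \<Rightarrow> 'h" where
  "epst scH mu one Dl eps p h = sum_list (map (\<lambda>(a, b). scH (eps (mu 0 a h)) b) (Dl 0 p (one p)))"

definition epss :: "('k::field \<Rightarrow> 'h::ab_group_add \<Rightarrow> 'h) \<Rightarrow> ('g::group_add \<Rightarrow> 'h \<Rightarrow> 'h \<Rightarrow> 'h) \<Rightarrow>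
    ('g \<Rightarrow> 'h) \<Rightarrow> ('g \<Rightarrow> 'g \<Rightarrow> 'h \<Rightarrow> ('h \<times> 'h) list) \<Rightarrow> ('h \<Rightarrow> 'k) \<Rightarrow> 'g \<Rightarrow> 'h \<Rightarrow> 'h" where
  "epss scH mu one Dl eps p h = sum_list (map (\<lambda>(a, b). scH (eps (mu 0 h b)) a) (Dl p 0 (one p)))"

text \<open>Here mu p is the multiplication of H_p, one p its unit, Dl p q h the
 comultiplication \<Delta>_{p,q}(h) for h in H_{p+q}, S p : H_p \<rightarrow> H_{-p}, and pi p q : H_q \<rightarrow> H_{p+q-p}
 is the crossing \<pi>_p restricted to H_q.\<close>
definition crossed_gcwhq ::
  "('k::field \<Rightarrow> 'h::ab_group_add \<Rightarrow> 'h) \<Rightarrow> ('g::group_add \<Rightarrow> 'h set) \<Rightarrow> ('g \<Rightarrow> 'h \<Rightarrow> 'h \<Rightarrow> 'h) \<Rightarrow>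
   ('g \<Rightarrow> 'h) \<Rightarrow> ('g \<Rightarrow> 'g \<Rightarrow> 'h \<Rightarrow> ('h \<times> 'h) list) \<Rightarrow> ('h \<Rightarrow> 'k) \<Rightarrow> ('g \<Rightarrow> 'h \<Rightarrow> 'h) \<Rightarrow>
   ('g \<Rightarrow> 'g \<Rightarrow> 'h \<Rightarrow> 'h) \<Rightarrow> bool" where
  "crossed_gcwhq scH Hc mu one Dl eps S pi \<longleftrightarrow>
    vector_space scH \<and>
    (\<forall>p. 0 \<in> Hc p \<and> (\<forall>x\<in>Hc p. \<forall>y\<in>Hc p. x + y \<in> Hc p) \<and> (\<forall>c. \<forall>x\<in>Hc p. scH c x \<in> Hc p)) \<and>
    \<comment> \<open>each H_p is a unital (not necessarily associative) k-algebra\<close>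
    (\<forall>p. \<forall>x\<in>Hc p. \<forall>y\<in>Hc p. mu p x y \<in> Hc p) \<and>
    (\<forall>p. \<forall>x\<in>Hc p. \<forall>y\<in>Hc p. \<forall>z\<in>Hc p.
        mu p (x + y) z = mu p x z + mu p y z \<and> mu p z (x + y) = mu p z x + mu p z y) \<and>
    (\<forall>p c. \<forall>x\<in>Hc p. \<forall>y\<in>Hc p. mu p (scH c x) y = scH c (mu p x y) \<and> mu p x (scH c y) = scH c (mu p x y)) \<and>
    (\<forall>p. one p \<in> Hc p \<and> (\<forall>x\<in>Hc p. mu p (one p) x = x \<and> mu p x (one p) = x)) \<and>
    \<comment> \<open>linear, coassociative comultiplication\<close>
    (\<forall>p q. tlin scH (Hc (p + q)) scH (Hc p) scH (Hc q) (Dl p q)) \<and>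
    (\<forall>p q r. \<forall>h\<in>Hc (p + q + r).
        teq3 scH (Hc p) scH (Hc q) scH (Hc r) (delta3 Dl p q r h)
          [(a, b, c). (a, y) \<leftarrow> Dl p (q + r) h, (b, c) \<leftarrow> Dl q r y]) \<and>
    \<comment> \<open>counit\<close>
    lin_fun scH (Hc 0) eps \<and>
    (\<forall>p. \<forall>h\<in>Hc p. sum_list (map (\<lambda>(a, b). scH (eps a) b) (Dl 0 p h)) = h
                 \<and> sum_list (map (\<lambda>(a, b). scH (eps b) a) (Dl p 0 h)) = h) \<and>
    \<comment> \<open>(1)\<close>
    (\<forall>p q. \<forall>g\<in>Hc (p + q). \<forall>h\<in>Hc (p + q).
        teq2 scH (Hc p) scH (Hc q) (Dl p q (mu (p + q) g h))
          [(mu p a c, mu q b d). (a, b) \<leftarrow> Dl p q g, (c, d) \<leftarrow> Dl p q h]) \<and>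
    (\<forall>p q r.
        teq3 scH (Hc p) scH (Hc q) scH (Hc r) (delta3 Dl p q r (one (p + q + r)))
          [(mu p a (one p), mu q b c, mu r (one r) d). (a, b) \<leftarrow> Dl p q (one (p + q)), (c, d) \<leftarrow> Dl q r (one (q + r))] \<and>
        teq3 scH (Hc p) scH (Hc q) scH (Hc r) (delta3 Dl p q r (one (p + q + r)))
          [(mu p (one p) a, mu q c b, mu r d (one r)). (a, b) \<leftarrow> Dl p q (one (p + q)), (c, d) \<leftarrow> Dl q r (one (q + r))]) \<and>
    \<comment> \<open>(2)\<close>
    (\<forall>g\<in>Hc 0. \<forall>h\<in>Hc 0. \<forall>l\<in>Hc 0.
        eps (mu 0 (mu 0 g h) l) = eps (mu 0 g (mu 0 h l)) \<and>
        eps (mu 0 g (mu 0 h l)) = sum_list (map (\<lambda>(a, b). eps (mu 0 g b) * eps (mu 0 a l)) (Dl 0 0 h)) \<and>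
        sum_list (map (\<lambda>(a, b). eps (mu 0 g b) * eps (mu 0 a l)) (Dl 0 0 h))
          = sum_list (map (\<lambda>(a, b). eps (mu 0 g a) * eps (mu 0 b l)) (Dl 0 0 h))) \<and>
    \<comment> \<open>(3) antipode\<close>
    (\<forall>p. lin_map scH (Hc p) scH (Hc (- p)) (S p)) \<and>
    (\<forall>p. \<forall>h\<in>Hc p.
        S p h = sum_list (map (\<lambda>(a, b). mu (- p) (S p a) (epst scH mu one Dl eps (- p) b)) (Dl p 0 h)) \<and>
        S p h = sum_list (map (\<lambda>(a, b). mu (- p) (epss scH mu one Dl eps (- p) a) (S p b)) (Dl 0 p h))) \<and>
    (\<forall>p. \<forall>h\<in>Hc 0. \<forall>g\<in>Hc p.
        sum_list (map (\<lambda>(a, b). mu p (S (- p) a) (mu p b g)) (Dl (- p) p h)) = mu p (epss scH mu one Dl eps p h) g \<and>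
        sum_list (map (\<lambda>(a, b). mu p a (mu p (S (- p) b) g)) (Dl p (- p) h)) = mu p (epst scH mu one Dl eps p h) g \<and>
        sum_list (map (\<lambda>(a, b). mu p (mu p g a) (S (- p) b)) (Dl p (- p) h)) = mu p g (epst scH mu one Dl eps p h) \<and>
        sum_list (map (\<lambda>(a, b). mu p (mu p g (S (- p) a)) b) (Dl (- p) p h)) = mu p g (epss scH mu one Dl eps p h)) \<and>
    \<comment> \<open>crossing\<close>
    (\<forall>p q. lin_map scH (Hc q) scH (Hc (p + q + - p)) (pi p q) \<and> bij_betw (pi p q) (Hc q) (Hc (p + q + - p)) \<and>
        (\<forall>x\<in>Hc q. \<forall>y\<in>Hc q. pi p q (mu q x y) = mu (p + q + - p) (pi p q x) (pi p q y)) \<and>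
        pi p q (one q) = one (p + q + - p)) \<and>
    (\<forall>p q r. \<forall>h\<in>Hc (q + r).
        teq2 scH (Hc (p + q + - p)) scH (Hc (p + r + - p))
          (map (\<lambda>(a, b). (pi p q a, pi p r b)) (Dl q r h))
          (Dl (p + q + - p) (p + r + - p) (pi p (q + r) h))) \<and>
    (\<forall>p. \<forall>h\<in>Hc 0. eps (pi p 0 h) = eps h) \<and>
    (\<forall>p q r. \<forall>h\<in>Hc r. pi (p + q) r h = pi p (q + r + - q) (pi q r h))"

text \<open>The vector
 space V is the type 'v with scalar multiplication scV; act v h = v \<cdot> h for h in H_p;
 rho r v is \<rho>_r(v) \<in> V \<otimes> H_r.\<close>
definition ydwq ::
  "('k::field \<Rightarrow> 'h::ab_group_add \<Rightarrow> 'h) \<Rightarrow> ('g::group_add \<Rightarrow> 'h set) \<Rightarrow> ('g \<Rightarrow> 'h \<Rightarrow> 'h \<Rightarrow> 'h) \<Rightarrow>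
   ('g \<Rightarrow> 'h) \<Rightarrow> ('g \<Rightarrow> 'g \<Rightarrow> 'h \<Rightarrow> ('h \<times> 'h) list) \<Rightarrow> ('h \<Rightarrow> 'k) \<Rightarrow> ('g \<Rightarrow> 'h \<Rightarrow> 'h) \<Rightarrow>
   ('g \<Rightarrow> 'g \<Rightarrow> 'h \<Rightarrow> 'h) \<Rightarrow> ('k \<Rightarrow> 'v::ab_group_add \<Rightarrow> 'v) \<Rightarrow> 'g \<Rightarrow>
   ('v \<Rightarrow> 'h \<Rightarrow> 'v) \<Rightarrow> ('g \<Rightarrow> 'v \<Rightarrow> ('v \<times> 'h) list) \<Rightarrow> bool" where
  "ydwq scH Hc mu one Dl eps S pi scV p act rho \<longleftrightarrow>
    vector_space scV \<and>
    \<comment> \<open>bilinear action V \<times> H_p \<rightarrow> V\<close>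
    (\<forall>h\<in>Hc p. \<forall>v w. act (v + w) h = act v h + act w h) \<and>
    (\<forall>h\<in>Hc p. \<forall>c v. act (scV c v) h = scV c (act v h)) \<and>
    (\<forall>v. \<forall>x\<in>Hc p. \<forall>y\<in>Hc p. act v (x + y) = act v x + act v y) \<and>
    (\<forall>v c. \<forall>x\<in>Hc p. act v (scH c x) = scV c (act v x)) \<and>
    \<comment> \<open>(i)\<close>
    (\<forall>v. act v (one p) = v) \<and>
    (\<forall>v. \<forall>h\<in>Hc 0.
       sum_list (map (\<lambda>(a, b). act (act v a) (S (- p) b)) (Dl p (- p) h)) = act v (epst scH mu one Dl eps p h) \<and>
       sum_list (map (\<lambda>(a, b). act (act v (S (- p) a)) b) (Dl (- p) p h)) = act v (epss scH mu one Dl eps p h)) \<and>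
    \<comment> \<open>(ii)\<close>
    (\<forall>r. tlin scV UNIV scV UNIV scH (Hc r) (rho r)) \<and>
    (\<forall>r1 r2 v. teq3 scV UNIV scH (Hc r1) scH (Hc r2)
        [(a, b, c). (x, c) \<leftarrow> rho r2 v, (a, b) \<leftarrow> rho r1 x]
        [(a, b, c). (a, y) \<leftarrow> rho (r1 + r2) v, (b, c) \<leftarrow> Dl r1 r2 y]) \<and>
    (\<forall>v. sum_list (map (\<lambda>(a, b). scV (eps b) a) (rho 0 v)) = v) \<and>
    \<comment> \<open>(iii)\<close>
    (\<forall>v r. \<forall>h\<in>Hc p. teq2 scV UNIV scH (Hc r) (rho r (act v h))
        [(act a h2, mu r (S (- r) (pi (- p) (p + - r + - p) h1)) (mu r b h3)).
            (a, b) \<leftarrow> rho r v, (h1, h2, h3) \<leftarrow> delta3 Dl (p + - r + - p) p r h]) \<and>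
    (\<forall>v r. \<forall>g\<in>Hc r. \<forall>l\<in>Hc r.
        teq2 scV UNIV scH (Hc r) [(a, mu r (mu r g l) b). (a, b) \<leftarrow> rho r v] [(a, mu r g (mu r l b)). (a, b) \<leftarrow> rho r v] \<and>
        teq2 scV UNIV scH (Hc r) [(a, mu r (mu r g b) l). (a, b) \<leftarrow> rho r v] [(a, mu r g (mu r b l)). (a, b) \<leftarrow> rho r v])"

end

theory Submission imports Defs begin

declare add_uminus_conv_diff[simp del]
lemmas gsimps = add.assoc minus_add diff_conv_add_uminus

lemma sum_list_concat_map: "sum_list (concat xss) = sum_list (map sum_list xss)" by (induction xss) auto

lemma sum2_map: "sum_list (map (\<lambda>(a, b). g a b) (map (\<lambda>(a, b). (f1 a, f2 b)) xs)) = sum_list (map (\<lambda>(a, b). g (f1 a) (f2 b)) xs)"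
  by (induction xs) auto

lemma sum3_map: "sum_list (map (\<lambda>(a, b, c). g a b c) (map (\<lambda>(a, b, c). (f1 a, f2 b, f3 c)) xs)) = sum_list (map (\<lambda>(a, b, c). g (f1 a) (f2 b) (f3 c)) xs)"
  by (induction xs) auto

lemma sum2_map2: "sum_list (map (\<lambda>(a, b). g a b) (map (\<lambda>(a, b). (a, f b)) xs)) = sum_list (map (\<lambda>(a, b). g a (f b)) xs)"
  by (induction xs) auto

lemma sum2_add: "sum_list (map (\<lambda>(a, b). f a b + g a b) xs) = sum_list (map (\<lambda>(a, b). f a b) xs) + sum_list (map (\<lambda>(a, b). (g a b :: 'c::comm_monoid_add)) xs)"
  by (induction xs) (auto simp: algebra_simps)

lemma sum2_add_cong: "(\<And>a b. (a, b) \<in> set xs \<Longrightarrow> F a b = f a b + g a b) \<Longrightarrow>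
  sum_list (map (\<lambda>(a, b). F a b) xs) = sum_list (map (\<lambda>(a, b). f a b) xs) + sum_list (map (\<lambda>(a, b). (g a b :: 'c::comm_monoid_add)) xs)"
  by (induction xs) (auto simp: algebra_simps)

lemma add_sum2:
  fixes F :: "'a::ab_group_add \<Rightarrow> 'b::ab_group_add"
  assumes "\<And>u v. u \<in> A \<Longrightarrow> v \<in> A \<Longrightarrow> F (u + v) = F u + F v" "0 \<in> A"
    "\<And>u v. u \<in> A \<Longrightarrow> v \<in> A \<Longrightarrow> u + v \<in> A" "\<And>a b. (a, b) \<in> set xs \<Longrightarrow> f a b \<in> A"
  shows "F (sum_list (map (\<lambda>(a, b). f a b) xs)) = sum_list (map (\<lambda>(a, b). F (f a b)) xs)"
proof -
  have z: "F 0 = 0" using assms(1)[OF assms(2) assms(2)] by simp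
  have "F (sum_list (map (\<lambda>(a, b). f a b) xs)) = sum_list (map (\<lambda>(a, b). F (f a b)) xs) \<and>
     sum_list (map (\<lambda>(a, b). f a b) xs) \<in> A" using assms(4)
  proof (induction xs)
    case Nil then show ?case using z assms(2) by simp
  next
    case (Cons a xs) then show ?case using assms(1,3) by (cases a) auto
  qed
  then show ?thesis by simp
qed

definition lin :: "('k::field \<Rightarrow> 'a::ab_group_add \<Rightarrow> 'a) \<Rightarrow> 'a set \<Rightarrow> ('k \<Rightarrow> 'c::ab_group_add \<Rightarrow> 'c) \<Rightarrow> ('a \<Rightarrow> 'c) \<Rightarrow> bool" where
  "lin sA A sC f \<longleftrightarrow> (\<forall>x\<in>A. \<forall>y\<in>A. f (x + y) = f x + f y) \<and> (\<forall>c. \<forall>x\<in>A. f (sA c x) = sC c (f x))"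

lemma vs_field: "vector_space ((*) :: 'k::field \<Rightarrow> 'k \<Rightarrow> 'k)"
  by unfold_locales (auto simp: algebra_simps)

lemma sep:
  fixes sC :: "'k::field \<Rightarrow> 'c::ab_group_add \<Rightarrow> 'c"
  assumes vs: "vector_space sC"
    and all: "\<And>l :: 'c \<Rightarrow> 'k. lin sC UNIV (*) l \<Longrightarrow> l u = l w"
  shows "u = w"
proof (rule ccontr)
  assume ne: "u \<noteq> w"
  interpret vp: vector_space_pair sC "(*) :: 'k \<Rightarrow> 'k \<Rightarrow> 'k"
    using vs vs_field by (simp add: vector_space_pair_def)
  have ind: "vp.vs1.independent {u - w}" using ne
    by (simp add: vp.vs1.independent_insert vp.vs1.span_empty)
  define l where "l = vp.construct {u - w} (\<lambda>_. 1::'k)"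
  have ll: "Vector_Spaces.linear sC (*) l" unfolding l_def using vp.linear_construct[OF ind, of "\<lambda>_. 1"] by simp
  have "l (u - w) = 1" unfolding l_def by (rule vp.construct_basis[OF ind]) simp
  moreover have "l (u - w) = l u - l w" using vp.linear_diff[OF ll] .
  moreover have "lin sC UNIV (*) l" using vp.linear_add[OF ll] vp.linear_scale[OF ll]
    by (simp add: lin_def)
  ultimately show False using all[of l] by simp
qed


lemma lin_fun_lin: "lin_fun sA A f = lin sA A (*) f"
  by (simp add: lin_fun_def lin_def)

lemma lin_UNIV_sum_list:
  assumes "lin sC UNIV sD l"
  shows "l (sum_list xs) = sum_list (map l xs)"
proof -
  have z: "l 0 = 0" using assms unfolding lin_def by (metis add.right_neutral add_left_cancel UNIV_I)
  show ?thesis using assms z by (induction xs) (auto simp: lin_def)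
qed

lemma lin_sum_list:
  assumes "lin sA A sD f" "0 \<in> A" "\<forall>x\<in>A. \<forall>y\<in>A. x + y \<in> A" "set xs \<subseteq> A"
  shows "f (sum_list xs) = sum_list (map f xs)"
proof -
  have z: "f 0 = 0" using assms unfolding lin_def by (metis add.right_neutral add_left_cancel)
  have "f (sum_list xs) = sum_list (map f xs) \<and> sum_list xs \<in> A" using assms(4)
  proof (induction xs)
    case Nil then show ?case using z assms(2) by simp
  next
    case (Cons a xs) then show ?case using assms(1,3) unfolding lin_def by auto
  qed
  then show ?thesis by simp
qed

lemma teq2_vec:
  fixes sC :: "'k::field \<Rightarrow> 'c::ab_group_add \<Rightarrow> 'c"
  assumes vs: "vector_space sC" and T: "teq2 sA A sB B X Y"
    and l1: "\<forall>b\<in>B. lin sA A sC (\<lambda>a. f a b)" and l2: "\<forall>a\<in>A. lin sB B sC (f a)"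
  shows "sum_list (map (\<lambda>(a, b). f a b) X) = sum_list (map (\<lambda>(a, b). f a b) Y)"
proof (rule sep[OF vs])
  fix l :: "'c \<Rightarrow> 'k" assume l: "lin sC UNIV (*) l"
  have "sum_list (map (\<lambda>(a, b). l (f a b)) X) = sum_list (map (\<lambda>(a, b). l (f a b)) Y)"
    using T unfolding teq2_def
    apply (elim allE[where x="\<lambda>a b. l (f a b)"])
    apply (erule mp)
    using l l1 l2 by (auto simp: lin_fun_def lin_def)
  then show "l (sum_list (map (\<lambda>(a, b). f a b) X)) = l (sum_list (map (\<lambda>(a, b). f a b) Y))"
    by (simp add: lin_UNIV_sum_list[OF l] comp_def case_prod_unfold)
qed

lemma teq3_vec:
  fixes sD :: "'k::field \<Rightarrow> 'd::ab_group_add \<Rightarrow> 'd"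
  assumes vs: "vector_space sD" and T: "teq3 sA A sB B sC C X Y"
    and l1: "\<forall>b\<in>B. \<forall>c\<in>C. lin sA A sD (\<lambda>a. f a b c)" and l2: "\<forall>a\<in>A. \<forall>c\<in>C. lin sB B sD (\<lambda>b. f a b c)"
    and l3: "\<forall>a\<in>A. \<forall>b\<in>B. lin sC C sD (f a b)"
  shows "sum_list (map (\<lambda>(a, b, c). f a b c) X) = sum_list (map (\<lambda>(a, b, c). f a b c) Y)"
proof (rule sep[OF vs])
  fix l :: "'d \<Rightarrow> 'k" assume l: "lin sD UNIV (*) l"
  have "sum_list (map (\<lambda>(a, b, c). l (f a b c)) X) = sum_list (map (\<lambda>(a, b, c). l (f a b c)) Y)"
    using T unfolding teq3_def
    apply (elim allE[where x="\<lambda>a b c. l (f a b c)"])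
    apply (erule mp)
    using l l1 l2 l3 by (auto simp: lin_fun_def lin_def)
  then show "l (sum_list (map (\<lambda>(a, b, c). f a b c) X)) = l (sum_list (map (\<lambda>(a, b, c). f a b c) Y))"
    by (simp add: lin_UNIV_sum_list[OF l] comp_def case_prod_unfold)
qed

lemma sum2_cong:
  "(\<And>a b. (a, b) \<in> set xs \<Longrightarrow> f a b = g a b) \<Longrightarrow>
   sum_list (map (\<lambda>(a, b). f a b) xs) = sum_list (map (\<lambda>(a, b). g a b) xs)"
  by (induction xs) auto

lemma sum3_cong:
  "(\<And>a b c. (a, b, c) \<in> set xs \<Longrightarrow> f a b c = g a b c) \<Longrightarrow>
   sum_list (map (\<lambda>(a, b, c). f a b c) xs) = sum_list (map (\<lambda>(a, b, c). g a b c) xs)"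
  by (induction xs) auto


declare gsimps[simp]

locale HQ =
  fixes scH :: "'k::field \<Rightarrow> 'h::ab_group_add \<Rightarrow> 'h"
    and Hc :: "'g::group_add \<Rightarrow> 'h set"
    and mu :: "'g \<Rightarrow> 'h \<Rightarrow> 'h \<Rightarrow> 'h"
    and one :: "'g \<Rightarrow> 'h"
    and Dl :: "'g \<Rightarrow> 'g \<Rightarrow> 'h \<Rightarrow> ('h \<times> 'h) list"
    and eps :: "'h \<Rightarrow> 'k"
    and S :: "'g \<Rightarrow> 'h \<Rightarrow> 'h"
    and pi :: "'g \<Rightarrow> 'g \<Rightarrow> 'h \<Rightarrow> 'h"
  assumes vsH: "vector_space scH"
    and sub: "\<forall>p. 0 \<in> Hc p \<and> (\<forall>x\<in>Hc p. \<forall>y\<in>Hc p. x + y \<in> Hc p) \<and> (\<forall>c. \<forall>x\<in>Hc p. scH c x \<in> Hc p)"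
    and mu_cl: "\<forall>p. \<forall>x\<in>Hc p. \<forall>y\<in>Hc p. mu p x y \<in> Hc p"
    and mu_add: "\<forall>p. \<forall>x\<in>Hc p. \<forall>y\<in>Hc p. \<forall>z\<in>Hc p.
        mu p (x + y) z = mu p x z + mu p y z \<and> mu p z (x + y) = mu p z x + mu p z y"
    and mu_sc: "\<forall>p c. \<forall>x\<in>Hc p. \<forall>y\<in>Hc p. mu p (scH c x) y = scH c (mu p x y) \<and> mu p x (scH c y) = scH c (mu p x y)"
    and unit: "\<forall>p. one p \<in> Hc p \<and> (\<forall>x\<in>Hc p. mu p (one p) x = x \<and> mu p x (one p) = x)"
    and Dl_tlin: "\<forall>p q. tlin scH (Hc (p + q)) scH (Hc p) scH (Hc q) (Dl p q)"
    and coassoc: "\<forall>p q r. \<forall>h\<in>Hc (p + q + r).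
        teq3 scH (Hc p) scH (Hc q) scH (Hc r) (delta3 Dl p q r h)
          [(a, b, c). (a, y) \<leftarrow> Dl p (q + r) h, (b, c) \<leftarrow> Dl q r y]"
    and eps_lin: "lin_fun scH (Hc 0) eps"
    and S_lin: "\<forall>p. lin_map scH (Hc p) scH (Hc (- p)) (S p)"
    and S_ax: "\<forall>p. \<forall>h\<in>Hc p.
        S p h = sum_list (map (\<lambda>(a, b). mu (- p) (S p a) (epst scH mu one Dl eps (- p) b)) (Dl p 0 h)) \<and>
        S p h = sum_list (map (\<lambda>(a, b). mu (- p) (epss scH mu one Dl eps (- p) a) (S p b)) (Dl 0 p h))"
    and S_id: "\<forall>p. \<forall>h\<in>Hc 0. \<forall>g\<in>Hc p.
        sum_list (map (\<lambda>(a, b). mu p (S (- p) a) (mu p b g)) (Dl (- p) p h)) = mu p (epss scH mu one Dl eps p h) g \<and>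
        sum_list (map (\<lambda>(a, b). mu p a (mu p (S (- p) b) g)) (Dl p (- p) h)) = mu p (epst scH mu one Dl eps p h) g \<and>
        sum_list (map (\<lambda>(a, b). mu p (mu p g a) (S (- p) b)) (Dl p (- p) h)) = mu p g (epst scH mu one Dl eps p h) \<and>
        sum_list (map (\<lambda>(a, b). mu p (mu p g (S (- p) a)) b) (Dl (- p) p h)) = mu p g (epss scH mu one Dl eps p h)"
    and pi_ax: "\<forall>p q. lin_map scH (Hc q) scH (Hc (p + q + - p)) (pi p q) \<and> bij_betw (pi p q) (Hc q) (Hc (p + q + - p)) \<and>
        (\<forall>x\<in>Hc q. \<forall>y\<in>Hc q. pi p q (mu q x y) = mu (p + q + - p) (pi p q x) (pi p q y)) \<and>
        pi p q (one q) = one (p + q + - p)"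
    and pi_Dl0: "\<forall>p q r. \<forall>h\<in>Hc (q + r).
        teq2 scH (Hc (p + q + - p)) scH (Hc (p + r + - p))
          (map (\<lambda>(a, b). (pi p q a, pi p r b)) (Dl q r h))
          (Dl (p + q + - p) (p + r + - p) (pi p (q + r) h))"
    and eps_pi: "\<forall>p. \<forall>h\<in>Hc 0. eps (pi p 0 h) = eps h"
    and pi_comp0: "\<forall>p q r. \<forall>h\<in>Hc r. pi (p + q) r h = pi p (q + r + - q) (pi q r h)"

lemma HQ_intro: "crossed_gcwhq scH Hc mu one Dl eps S pi \<Longrightarrow> HQ scH Hc mu one Dl eps S pi"
  unfolding crossed_gcwhq_def HQ_def by (elim conjE) (intro conjI; assumption)

context HQ
begin

abbreviation "et \<equiv> epst scH mu one Dl eps"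
abbreviation "es \<equiv> epss scH mu one Dl eps"

lemmas gsimps = add.assoc minus_add

lemma Hc0[simp]: "0 \<in> Hc p" using sub by blast
lemma Hc_add[simp]: "x \<in> Hc p \<Longrightarrow> y \<in> Hc p \<Longrightarrow> x + y \<in> Hc p" using sub by blast
lemma Hc_sc[simp]: "x \<in> Hc p \<Longrightarrow> scH c x \<in> Hc p" using sub by blast
lemma Hc_sum: "set xs \<subseteq> Hc p \<Longrightarrow> sum_list xs \<in> Hc p"
  by (induction xs) auto
lemma mu_in[simp]: "x \<in> Hc p \<Longrightarrow> y \<in> Hc p \<Longrightarrow> mu p x y \<in> Hc p" using mu_cl by blast
lemma mu_addl[simp]: "x \<in> Hc p \<Longrightarrow> y \<in> Hc p \<Longrightarrow> z \<in> Hc p \<Longrightarrow> mu p (x + y) z = mu p x z + mu p y z" using mu_add by blast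
lemma mu_addr[simp]: "x \<in> Hc p \<Longrightarrow> y \<in> Hc p \<Longrightarrow> z \<in> Hc p \<Longrightarrow> mu p z (x + y) = mu p z x + mu p z y" using mu_add by blast
lemma mu_scl[simp]: "x \<in> Hc p \<Longrightarrow> y \<in> Hc p \<Longrightarrow> mu p (scH c x) y = scH c (mu p x y)" using mu_sc by blast
lemma mu_scr[simp]: "x \<in> Hc p \<Longrightarrow> y \<in> Hc p \<Longrightarrow> mu p x (scH c y) = scH c (mu p x y)" using mu_sc by blast
lemma one_in[simp]: "one p \<in> Hc p" using unit by blast
lemma mu_one_l[simp]: "x \<in> Hc p \<Longrightarrow> mu p (one p) x = x" using unit by blast
lemma mu_one_r[simp]: "x \<in> Hc p \<Longrightarrow> mu p x (one p) = x" using unit by blast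

lemma S_in[simp]: "h \<in> Hc r \<Longrightarrow> - r = m \<Longrightarrow> S r h \<in> Hc m"
  using S_lin unfolding lin_map_def by blast
lemma S_addh[simp]: "x \<in> Hc r \<Longrightarrow> y \<in> Hc r \<Longrightarrow> S r (x + y) = S r x + S r y"
  using S_lin unfolding lin_map_def by blast
lemma S_sch[simp]: "x \<in> Hc r \<Longrightarrow> S r (scH c x) = scH c (S r x)"
  using S_lin unfolding lin_map_def by blast

lemma pi_in[simp]: "h \<in> Hc r \<Longrightarrow> x + r + - x = m \<Longrightarrow> pi x r h \<in> Hc m"
  using pi_ax unfolding lin_map_def by blast
lemma pi_addh[simp]: "a \<in> Hc r \<Longrightarrow> b \<in> Hc r \<Longrightarrow> pi x r (a + b) = pi x r a + pi x r b"
  using pi_ax unfolding lin_map_def by blast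
lemma pi_sch[simp]: "a \<in> Hc r \<Longrightarrow> pi x r (scH c a) = scH c (pi x r a)"
  using pi_ax unfolding lin_map_def by blast
lemma pi_mu: "a \<in> Hc r \<Longrightarrow> b \<in> Hc r \<Longrightarrow> x + r + - x = m \<Longrightarrow> pi x r (mu r a b) = mu m (pi x r a) (pi x r b)"
  using pi_ax by blast
lemma pi_one: "x + r + - x = m \<Longrightarrow> pi x r (one r) = one m"
  using pi_ax by blast
lemma pi_one'[simp]: "pi x r (one r) = one (x + r + - x)"
  using pi_ax by blast
lemma pi_inj: "a \<in> Hc r \<Longrightarrow> b \<in> Hc r \<Longrightarrow> pi x r a = pi x r b \<Longrightarrow> a = b"
  using pi_ax unfolding bij_betw_def inj_on_def by blast

lemma pi_comp[simp]: "k \<in> Hc n \<Longrightarrow> b + n + - b = m \<Longrightarrow> pi a m (pi b n k) = pi (a + b) n k"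
  using pi_comp0 by metis

lemma pi_zero: "k \<in> Hc n \<Longrightarrow> c = 0 \<Longrightarrow> pi c n k = k"
proof -
  assume k: "k \<in> Hc n" and c: "c = 0"
  have "pi 0 n (pi 0 n k) = pi 0 n k" using pi_comp[OF k, of 0 n 0] by simp
  then show ?thesis using pi_inj[of "pi 0 n k" n k 0] k c by simp
qed

lemma eps_pi': "h \<in> Hc 0 \<Longrightarrow> eps (pi x 0 h) = eps h" using eps_pi by blast

lemma Dl_in: "h \<in> Hc m \<Longrightarrow> m = p + q \<Longrightarrow> (a, b) \<in> set (Dl p q h) \<Longrightarrow> a \<in> Hc p \<and> b \<in> Hc q"
  using Dl_tlin unfolding tlin_def by blast

lemma Dl_add: "x \<in> Hc (p + q) \<Longrightarrow> y \<in> Hc (p + q) \<Longrightarrow>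
    teq2 scH (Hc p) scH (Hc q) (Dl p q (x + y)) (Dl p q x @ Dl p q y)"
  using Dl_tlin unfolding tlin_def by blast
lemma Dl_sc: "x \<in> Hc (p + q) \<Longrightarrow>
    teq2 scH (Hc p) scH (Hc q) (Dl p q (scH c x)) (map (\<lambda>(b, d). (scH c b, d)) (Dl p q x))"
  using Dl_tlin unfolding tlin_def by blast

lemma eps_add: "x \<in> Hc 0 \<Longrightarrow> y \<in> Hc 0 \<Longrightarrow> eps (x + y) = eps x + eps y"
  using eps_lin unfolding lin_fun_def by blast
lemma eps_sc: "x \<in> Hc 0 \<Longrightarrow> eps (scH c x) = c * eps x"
  using eps_lin unfolding lin_fun_def by blast

lemma pi_Dl: "h \<in> Hc s \<Longrightarrow> s = q + r \<Longrightarrow> x + q + - x = q' \<Longrightarrow> x + r + - x = r' \<Longrightarrow>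
   teq2 scH (Hc q') scH (Hc r') (map (\<lambda>(a, b). (pi x q a, pi x r b)) (Dl q r h)) (Dl q' r' (pi x s h))"
  using pi_Dl0 by blast

lemma coassoc': "h \<in> Hc m \<Longrightarrow> m = p + q + r \<Longrightarrow> t = q + r \<Longrightarrow>
        teq3 scH (Hc p) scH (Hc q) scH (Hc r) (delta3 Dl p q r h)
          [(a, b, c). (a, y) \<leftarrow> Dl p t h, (b, c) \<leftarrow> Dl q r y]"
  using coassoc by blast


sublocale vH: vector_space scH by (rule vsH)

declare eps_add[simp] eps_sc[simp] eps_pi'[simp] vH.scale_left_distrib[simp] vH.scale_right_distrib[simp]

lemma pi_sum2: "(\<And>a b. (a, b) \<in> set xs \<Longrightarrow> f a b \<in> Hc r) \<Longrightarrow>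
   pi x r (sum_list (map (\<lambda>(a, b). f a b) xs)) = sum_list (map (\<lambda>(a, b). pi x r (f a b)) xs)"
  by (rule add_sum2[where A="Hc r"]) auto
lemma S_sum2: "(\<And>a b. (a, b) \<in> set xs \<Longrightarrow> f a b \<in> Hc r) \<Longrightarrow>
   S r (sum_list (map (\<lambda>(a, b). f a b) xs)) = sum_list (map (\<lambda>(a, b). S r (f a b)) xs)"
  by (rule add_sum2[where A="Hc r"]) auto
lemma mul_sum2: "(\<And>a b. (a, b) \<in> set xs \<Longrightarrow> f a b \<in> Hc r) \<Longrightarrow> z \<in> Hc r \<Longrightarrow>
   mu r (sum_list (map (\<lambda>(a, b). f a b) xs)) z = sum_list (map (\<lambda>(a, b). mu r (f a b) z) xs)"
  by (rule add_sum2[where A="Hc r" and F="\<lambda>u. mu r u z"]) auto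
lemma mur_sum2: "(\<And>a b. (a, b) \<in> set xs \<Longrightarrow> f a b \<in> Hc r) \<Longrightarrow> z \<in> Hc r \<Longrightarrow>
   mu r z (sum_list (map (\<lambda>(a, b). f a b) xs)) = sum_list (map (\<lambda>(a, b). mu r z (f a b)) xs)"
  by (rule add_sum2[where A="Hc r" and F="\<lambda>u. mu r z u"]) auto

lemma Dl_in': "(a, b) \<in> set (Dl p q h) \<Longrightarrow> h \<in> Hc m \<Longrightarrow> m = p + q \<Longrightarrow> a \<in> Hc p"
  "(a, b) \<in> set (Dl p q h) \<Longrightarrow> h \<in> Hc m \<Longrightarrow> m = p + q \<Longrightarrow> b \<in> Hc q"
  using Dl_in by blast+

lemma et_add[simp]: "u \<in> Hc 0 \<Longrightarrow> v \<in> Hc 0 \<Longrightarrow> et p (u + v) = et p u + et p v"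
  unfolding epst_def
  by (subst sum2_add[symmetric], rule sum2_cong) (auto dest: Dl_in'[OF _ one_in])
lemma et_sc[simp]: "u \<in> Hc 0 \<Longrightarrow> et p (scH c u) = scH c (et p u)"
  unfolding epst_def
  by (subst add_sum2[where A=UNIV and F="scH c"], simp_all, rule sum2_cong) (auto dest: Dl_in'[OF _ one_in] simp: vH.scale_scale)
lemma es_add[simp]: "u \<in> Hc 0 \<Longrightarrow> v \<in> Hc 0 \<Longrightarrow> es p (u + v) = es p u + es p v"
  unfolding epss_def
  by (subst sum2_add[symmetric], rule sum2_cong) (auto dest: Dl_in'[OF _ one_in])
lemma es_sc[simp]: "u \<in> Hc 0 \<Longrightarrow> es p (scH c u) = scH c (es p u)"
  unfolding epss_def
  by (subst add_sum2[where A=UNIV and F="scH c"], simp_all, rule sum2_cong) (auto dest: Dl_in'[OF _ one_in] simp: vH.scale_scale)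

lemma et_in[simp]: "h \<in> Hc 0 \<Longrightarrow> et p h \<in> Hc p"
  unfolding epst_def by (rule Hc_sum) (auto dest: Dl_in'[OF _ one_in])
lemma es_in[simp]: "h \<in> Hc 0 \<Longrightarrow> es p h \<in> Hc p"
  unfolding epss_def by (rule Hc_sum) (auto dest: Dl_in'[OF _ one_in])

lemma et_pi:
  assumes h: "h \<in> Hc 0" and p': "x + p + - x = p'"
  shows "pi x p (et p h) = et p' (pi x 0 h)"
proof -
  let ?L = "Dl 0 p (one p)"
  have mem: "a \<in> Hc 0" "b \<in> Hc p" if "(a, b) \<in> set ?L" for a b
    using Dl_in'[OF that one_in] by auto
  have "pi x p (et p h) = sum_list (map (\<lambda>(a, b). pi x p (scH (eps (mu 0 a h)) b)) ?L)"
    unfolding epst_def by (rule pi_sum2) (simp add: mem)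
  also have "\<dots> = sum_list (map (\<lambda>(a, b). scH (eps (mu 0 (pi x 0 a) (pi x 0 h))) (pi x p b)) ?L)"
    by (rule sum2_cong) (simp add: mem h pi_mu[symmetric])
  also have "\<dots> = sum_list (map (\<lambda>(a, b). scH (eps (mu 0 a (pi x 0 h))) b) (map (\<lambda>(a, b). (pi x 0 a, pi x p b)) ?L))"
    by (simp only: sum2_map)
  also have "\<dots> = sum_list (map (\<lambda>(a, b). scH (eps (mu 0 a (pi x 0 h))) b) (Dl 0 p' (pi x p (one p))))"
    by (rule teq2_vec[OF vsH pi_Dl[where h="one p" and s=p and q=0 and r=p and x=x and q'=0 and r'=p']])
       (use h p' in \<open>auto simp: lin_def vH.scale_scale\<close>)
  also have "\<dots> = et p' (pi x 0 h)" using p' by (simp add: epst_def)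
  finally show ?thesis .
qed

lemma es_pi:
  assumes h: "h \<in> Hc 0" and p': "x + p + - x = p'"
  shows "pi x p (es p h) = es p' (pi x 0 h)"
proof -
  let ?L = "Dl p 0 (one p)"
  have mem: "a \<in> Hc p" "b \<in> Hc 0" if "(a, b) \<in> set ?L" for a b
    using Dl_in'[OF that one_in] by auto
  have "pi x p (es p h) = sum_list (map (\<lambda>(a, b). pi x p (scH (eps (mu 0 h b)) a)) ?L)"
    unfolding epss_def by (rule pi_sum2) (simp add: mem)
  also have "\<dots> = sum_list (map (\<lambda>(a, b). scH (eps (mu 0 (pi x 0 h) (pi x 0 b))) (pi x p a)) ?L)"
    by (rule sum2_cong) (simp add: mem h pi_mu[symmetric])
  also have "\<dots> = sum_list (map (\<lambda>(a, b). scH (eps (mu 0 (pi x 0 h) b)) a) (map (\<lambda>(a, b). (pi x p a, pi x 0 b)) ?L))"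
    by (simp only: sum2_map)
  also have "\<dots> = sum_list (map (\<lambda>(a, b). scH (eps (mu 0 (pi x 0 h) b)) a) (Dl p' 0 (pi x p (one p))))"
    by (rule teq2_vec[OF vsH pi_Dl[where h="one p" and s=p and q=p and r=0 and x=x and q'=p' and r'=0]])
       (use h p' in \<open>auto simp: lin_def vH.scale_scale\<close>)
  also have "\<dots> = es p' (pi x 0 h)" using p' by (simp add: epss_def)
  finally show ?thesis .
qed

lemma S_pi:
  assumes h: "h \<in> Hc r"
  shows "pi x (- r) (S r h) = S (x + r + - x) (pi x r h)"
proof -
  let ?n = "x + (- r + - x)" and ?r = "x + (r + - x)"
  let ?L = "Dl r 0 h"
  have memL: "a \<in> Hc r" "b \<in> Hc 0" if "(a, b) \<in> set ?L" for a b
    using Dl_in'[OF that h] by auto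
  have s1: "S r h = sum_list (map (\<lambda>(a, b). mu (- r) (S r a) (et (- r) b)) ?L)"
    using S_ax h by blast
  have s2: "pi x (- r) (S r h) = sum_list (map (\<lambda>(a, b). mu ?n (pi x (- r) (S r a)) (et ?n (pi x 0 b))) ?L)"
    unfolding s1
    apply (subst pi_sum2, simp add: memL)
    apply (rule sum2_cong)
    by (simp add: memL pi_mu[where m="?n"] et_pi[where p'="?n"])
  have s3: "mu ?n g (et ?n y) = sum_list (map (\<lambda>(c, d). mu ?n (mu ?n g c) (S ?r d)) (Dl ?n ?r y))"
    if "g \<in> Hc ?n" "y \<in> Hc 0" for g y
    using S_id[rule_format, where p="?n" and h=y and g=g] that by (simp add: gsimps)
  have s5: "sum_list (map (\<lambda>(c, d). mu ?n (mu ?n (pi x (- r) (S r a)) c) (S ?r d)) (Dl ?n ?r (pi x 0 b)))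
     = sum_list (map (\<lambda>(c, d). mu ?n (pi x (- r) (mu (- r) (S r a) c)) (S ?r (pi x r d))) (Dl (- r) r b))"
    if a: "a \<in> Hc r" and b: "b \<in> Hc 0" for a b
  proof -
    have memb: "c \<in> Hc (- r)" "d \<in> Hc r" if "(c, d) \<in> set (Dl (- r) r b)" for c d
      using Dl_in'[OF that b] by auto
    have "sum_list (map (\<lambda>(c, d). mu ?n (pi x (- r) (mu (- r) (S r a) c)) (S ?r (pi x r d))) (Dl (- r) r b))
      = sum_list (map (\<lambda>(c, d). mu ?n (mu ?n (pi x (- r) (S r a)) c) (S ?r d))
          (map (\<lambda>(c, d). (pi x (- r) c, pi x r d)) (Dl (- r) r b)))"
      unfolding sum2_map
      by (rule sum2_cong) (simp add: memb a pi_mu[where m="?n"])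
    also have "\<dots> = sum_list (map (\<lambda>(c, d). mu ?n (mu ?n (pi x (- r) (S r a)) c) (S ?r d)) (Dl ?n ?r (pi x 0 b)))"
      by (rule teq2_vec[OF vsH pi_Dl[where h=b and s=0 and q="- r" and r=r and x=x and q'="?n" and r'="?r"]])
         (use a b in \<open>auto simp: lin_def\<close>)
    finally show ?thesis by simp
  qed
  let ?F = "\<lambda>a c d. mu ?n (pi x (- r) (mu (- r) (S r a) c)) (S ?r (pi x r d))"
  have s6: "pi x (- r) (S r h) = sum_list (map (\<lambda>(a, b). sum_list (map (\<lambda>(c, d). ?F a c d) (Dl (- r) r b))) ?L)"
    unfolding s2
    by (rule sum2_cong) (simp add: memL s3 s5)
  also have "\<dots> = sum_list (map (\<lambda>(a, c, d). ?F a c d) [(a, c, d). (a, b) \<leftarrow> ?L, (c, d) \<leftarrow> Dl (- r) r b])"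
    by (simp add: sum_list_concat_map map_concat comp_def case_prod_unfold)
  also have "\<dots> = sum_list (map (\<lambda>(a, c, d). ?F a c d) (delta3 Dl r (- r) r h))"
    by (rule teq3_vec[OF vsH coassoc'[where h=h and m=r and p=r and q="- r" and r=r and t=0], symmetric])
       (use h in \<open>auto simp: lin_def\<close>)
  also have "\<dots> = sum_list (map (\<lambda>(y, d). sum_list (map (\<lambda>(a, c). ?F a c d) (Dl r (- r) y))) (Dl 0 r h))"
    by (simp add: delta3_def sum_list_concat_map map_concat comp_def case_prod_unfold)
  also have "\<dots> = sum_list (map (\<lambda>(y, d). mu ?n (es ?n (pi x 0 y)) (S ?r (pi x r d))) (Dl 0 r h))"
  proof (rule sum2_cong)
    fix y d assume yd: "(y, d) \<in> set (Dl 0 r h)"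
    have y: "y \<in> Hc 0" and d: "d \<in> Hc r" using Dl_in'[OF yd h] by auto
    have memy: "a \<in> Hc r" "c \<in> Hc (- r)" if "(a, c) \<in> set (Dl r (- r) y)" for a c
      using Dl_in'[OF that y] by auto
    have e1: "sum_list (map (\<lambda>(a, c). mu (- r) (S r a) c) (Dl r (- r) y)) = es (- r) y"
    proof -
      have "sum_list (map (\<lambda>(a, c). mu (- r) (S r a) c) (Dl r (- r) y))
          = sum_list (map (\<lambda>(a, c). mu (- r) (S (- (- r)) a) (mu (- r) c (one (- r)))) (Dl (- (- r)) (- r) y))"
        by simp (rule sum2_cong, simp add: memy)
      also have "\<dots> = mu (- r) (es (- r) y) (one (- r))"
        using S_id[rule_format, where p="- r" and h=y and g="one (- r)"] y by simp
      finally show ?thesis using y by simp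
    qed
    have "sum_list (map (\<lambda>(a, c). ?F a c d) (Dl r (- r) y))
        = mu ?n (sum_list (map (\<lambda>(a, c). pi x (- r) (mu (- r) (S r a) c)) (Dl r (- r) y))) (S ?r (pi x r d))"
      by (subst mul_sum2) (simp_all add: memy d)
    also have "\<dots> = mu ?n (pi x (- r) (sum_list (map (\<lambda>(a, c). mu (- r) (S r a) c) (Dl r (- r) y)))) (S ?r (pi x r d))"
      by (subst pi_sum2) (simp_all add: memy)
    also have "\<dots> = mu ?n (es ?n (pi x 0 y)) (S ?r (pi x r d))"
      unfolding e1 using y by (simp add: es_pi[where p'="?n"])
    finally show "(\<lambda>y d. sum_list (map (\<lambda>(a, c). ?F a c d) (Dl r (- r) y))) y d
       = (\<lambda>y d. mu ?n (es ?n (pi x 0 y)) (S ?r (pi x r d))) y d" by simp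
  qed
  also have "\<dots> = sum_list (map (\<lambda>(y, d). mu ?n (es ?n y) (S ?r d)) (map (\<lambda>(y, d). (pi x 0 y, pi x r d)) (Dl 0 r h)))"
    by (simp only: sum2_map)
  also have "\<dots> = sum_list (map (\<lambda>(y, d). mu ?n (es ?n y) (S ?r d)) (Dl 0 ?r (pi x r h)))"
    by (rule teq2_vec[OF vsH pi_Dl[where h=h and s=r and q=0 and r=r and x=x and q'=0 and r'="?r"]])
       (use h in \<open>auto simp: lin_def\<close>)
  also have "\<dots> = S ?r (pi x r h)"
  proof -
    have hh: "pi x r h \<in> Hc ?r" using h by simp
    have e: "S ?r (pi x r h) = sum_list (map (\<lambda>(a, b). mu (- ?r) (es (- ?r) a) (S ?r b)) (Dl 0 ?r (pi x r h)))"
      using S_ax hh by blast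
    show ?thesis unfolding e by simp
  qed
  finally show ?thesis by (simp add: gsimps)
qed

lemma pi_zero0[simp]: "k \<in> Hc n \<Longrightarrow> pi 0 n k = k"
  by (rule pi_zero) auto

lemma pi_mu'[simp]: "a \<in> Hc r \<Longrightarrow> b \<in> Hc r \<Longrightarrow> pi x r (mu r a b) = mu (x + r + - x) (pi x r a) (pi x r b)"
  by (rule pi_mu) auto

lemma S_pi'[simp]: "h \<in> Hc r \<Longrightarrow> - r = m \<Longrightarrow> pi x m (S r h) = S (x + r + - x) (pi x r h)"
  using S_pi by blast

lemma scale_sum2:
  assumes "vector_space sC"
  shows "sC c (sum_list (map (\<lambda>(a, b). f a b) xs)) = sum_list (map (\<lambda>(a, b). sC c (f a b)) xs)"
proof -
  interpret vector_space sC by fact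
  show ?thesis by (induction xs) (auto simp: scale_right_distrib)
qed

lemma Dl_sum_lin:
  fixes sC :: "'k \<Rightarrow> 'c::ab_group_add \<Rightarrow> 'c"
  assumes vs: "vector_space sC" and l1: "\<forall>b\<in>Hc q. lin scH (Hc p) sC (\<lambda>a. f a b)"
    and l2: "\<forall>a\<in>Hc p. lin scH (Hc q) sC (f a)" and m: "m = p + q"
  shows "lin scH (Hc m) sC (\<lambda>h. sum_list (map (\<lambda>(a, b). f a b) (Dl p q h)))"
  unfolding lin_def
proof (intro conjI ballI allI)
  fix x y assume x: "x \<in> Hc m" and y: "y \<in> Hc m"
  have "sum_list (map (\<lambda>(a, b). f a b) (Dl p q (x + y))) = sum_list (map (\<lambda>(a, b). f a b) (Dl p q x @ Dl p q y))"
    by (rule teq2_vec[OF vs Dl_add l1 l2]) (use x y m in auto)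
  then show "sum_list (map (\<lambda>(a, b). f a b) (Dl p q (x + y))) =
      sum_list (map (\<lambda>(a, b). f a b) (Dl p q x)) + sum_list (map (\<lambda>(a, b). f a b) (Dl p q y))" by simp
next
  fix c x assume x: "x \<in> Hc m"
  have "sum_list (map (\<lambda>(a, b). f a b) (Dl p q (scH c x))) = sum_list (map (\<lambda>(a, b). f a b) (map (\<lambda>(b, d). (scH c b, d)) (Dl p q x)))"
    by (rule teq2_vec[OF vs Dl_sc l1 l2]) (use x m in auto)
  also have "\<dots> = sum_list (map (\<lambda>(a, b). f (scH c a) b) (Dl p q x))"
    using sum2_map[of f "scH c" id] by (simp add: case_prod_unfold)
  also have "\<dots> = sum_list (map (\<lambda>(a, b). sC c (f a b)) (Dl p q x))"
    by (rule sum2_cong) (use l1 Dl_in'[OF _ x m] in \<open>auto simp: lin_def\<close>)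
  also have "\<dots> = sC c (sum_list (map (\<lambda>(a, b). f a b) (Dl p q x)))"
    by (rule scale_sum2[OF vs, symmetric])
  finally show "sum_list (map (\<lambda>(a, b). f a b) (Dl p q (scH c x))) = sC c (sum_list (map (\<lambda>(a, b). f a b) (Dl p q x)))" .
qed

lemma delta3_pi:
  assumes h0: "h0 \<in> Hc m" and m: "m = t + p + s"
    and t': "x + t + - x = t'" and p': "x + p + - x = p'" and s': "x + s + - x = s'"
  shows "teq3 scH (Hc t') scH (Hc p') scH (Hc s') (delta3 Dl t' p' s' (pi x m h0))
           (map (\<lambda>(a, b, c). (pi x t a, pi x p b, pi x s c)) (delta3 Dl t p s h0))"
  unfolding teq3_def
proof (intro allI impI)
  fix \<phi> :: "'h \<Rightarrow> 'h \<Rightarrow> 'h \<Rightarrow> 'k"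
  assume "(\<forall>b\<in>Hc p'. \<forall>c\<in>Hc s'. lin_fun scH (Hc t') (\<lambda>a. \<phi> a b c)) \<and> (\<forall>a\<in>Hc t'. \<forall>c\<in>Hc s'. lin_fun scH (Hc p') (\<lambda>b. \<phi> a b c)) \<and>
       (\<forall>a\<in>Hc t'. \<forall>b\<in>Hc p'. lin_fun scH (Hc s') (\<phi> a b))"
  then have l1: "\<forall>b\<in>Hc p'. \<forall>c\<in>Hc s'. lin scH (Hc t') (*) (\<lambda>a. \<phi> a b c)"
    and l2: "\<forall>a\<in>Hc t'. \<forall>c\<in>Hc s'. lin scH (Hc p') (*) (\<lambda>b. \<phi> a b c)"
    and l3: "\<forall>a\<in>Hc t'. \<forall>b\<in>Hc p'. lin scH (Hc s') (*) (\<phi> a b)" by (auto simp: lin_fun_lin)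
  define \<psi> where "\<psi> y z = sum_list (map (\<lambda>(a, b). \<phi> a b z) (Dl t' p' y))" for y z
  have psi1: "\<forall>z\<in>Hc s'. lin scH (Hc (t' + p')) (*) (\<lambda>y. \<psi> y z)"
    unfolding \<psi>_def using l1 l2 by (intro ballI Dl_sum_lin[OF vs_field]) auto
  have psi2: "\<forall>y\<in>Hc (t' + p'). lin scH (Hc s') (*) (\<psi> y)"
  proof (intro ballI)
    fix y assume y: "y \<in> Hc (t' + p')"
    show "lin scH (Hc s') (*) (\<psi> y)" unfolding \<psi>_def lin_def
    proof (intro conjI ballI allI)
      fix z1 z2 assume zz: "z1 \<in> Hc s'" "z2 \<in> Hc s'"
      show "sum_list (map (\<lambda>(a, b). \<phi> a b (z1 + z2)) (Dl t' p' y)) =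
          sum_list (map (\<lambda>(a, b). \<phi> a b z1) (Dl t' p' y)) + sum_list (map (\<lambda>(a, b). \<phi> a b z2) (Dl t' p' y))"
        by (rule sum2_add_cong) (use zz l3 Dl_in'[OF _ y] in \<open>auto simp: lin_def\<close>)
    next
      fix c z assume zz: "z \<in> Hc s'"
      show "sum_list (map (\<lambda>(a, b). \<phi> a b (scH c z)) (Dl t' p' y)) =
          c * sum_list (map (\<lambda>(a, b). \<phi> a b z) (Dl t' p' y))"
        by (subst scale_sum2[OF vs_field, of c "\<lambda>a b. \<phi> a b z"], rule sum2_cong) (use zz l3 Dl_in'[OF _ y] in \<open>auto simp: lin_def\<close>)
    qed
  qed
  have "sum_list (map (\<lambda>(a, b, c). \<phi> a b c) (delta3 Dl t' p' s' (pi x m h0)))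
      = sum_list (map (\<lambda>(y, z). \<psi> y z) (Dl (t' + p') s' (pi x m h0)))"
    by (simp add: delta3_def \<psi>_def sum_list_concat_map map_concat comp_def case_prod_unfold)
  also have "\<dots> = sum_list (map (\<lambda>(y, z). \<psi> y z) (map (\<lambda>(y, z). (pi x (t + p) y, pi x s z)) (Dl (t + p) s h0)))"
    by (rule teq2_vec[OF vs_field pi_Dl[where h=h0 and s=m and q="t + p" and r=s and x=x and q'="t' + p'" and r'=s'], symmetric])
       (use h0 m t' p' s' psi1 psi2 in auto)
  also have "\<dots> = sum_list (map (\<lambda>(y, z). sum_list (map (\<lambda>(a, b). \<phi> (pi x t a) (pi x p b) (pi x s z)) (Dl t p y))) (Dl (t + p) s h0))"
    unfolding sum2_map
  proof (rule sum2_cong)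
    fix y z assume yz: "(y, z) \<in> set (Dl (t + p) s h0)"
    have y: "y \<in> Hc (t + p)" and z: "z \<in> Hc s" using Dl_in'[OF yz h0] m by auto
    have pz: "pi x s z \<in> Hc s'" using z s' by auto
    have "\<psi> (pi x (t + p) y) (pi x s z) = sum_list (map (\<lambda>(a, b). \<phi> a b (pi x s z)) (map (\<lambda>(a, b). (pi x t a, pi x p b)) (Dl t p y)))"
      unfolding \<psi>_def
      by (rule teq2_vec[OF vs_field pi_Dl[where h=y and s="t + p" and q=t and r=p and x=x and q'=t' and r'=p'], symmetric])
         (use y t' p' pz l1 l2 in auto)
    then show "\<psi> (pi x (t + p) y) (pi x s z) = sum_list (map (\<lambda>(a, b). \<phi> (pi x t a) (pi x p b) (pi x s z)) (Dl t p y))"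
      by (simp only: sum2_map)
  qed
  also have "\<dots> = sum_list (map (\<lambda>(a, b, c). \<phi> a b c) (map (\<lambda>(a, b, c). (pi x t a, pi x p b, pi x s c)) (delta3 Dl t p s h0)))"
    by (simp add: delta3_def sum3_map sum_list_concat_map map_concat comp_def case_prod_unfold)
  finally show "sum_list (map (\<lambda>(a, b, c). \<phi> a b c) (delta3 Dl t' p' s' (pi x m h0))) =
    sum_list (map (\<lambda>(a, b, c). \<phi> a b c) (map (\<lambda>(a, b, c). (pi x t a, pi x p b, pi x s c)) (delta3 Dl t p s h0)))" .
qed

lemma delta3_in:
  assumes k: "(k1, k2, k3) \<in> set (delta3 Dl t p s h)" and h: "h \<in> Hc m" and m: "m = t + p + s"
  shows "k1 \<in> Hc t \<and> k2 \<in> Hc p \<and> k3 \<in> Hc s"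
proof -
  from k obtain y z where yz: "(y, z) \<in> set (Dl (t + p) s h)" and kk: "(k1, k2) \<in> set (Dl t p y)" and z: "k3 = z"
    unfolding delta3_def by auto
  have "y \<in> Hc (t + p)" "z \<in> Hc s" using Dl_in'[OF yz h] m by auto
  then show ?thesis using Dl_in'[OF kk] z by auto
qed

end

locale YD = HQ scH Hc mu one Dl eps S pi
  for scH :: "'k::field \<Rightarrow> 'h::ab_group_add \<Rightarrow> 'h"
    and Hc :: "'g::group_add \<Rightarrow> 'h set"
    and mu :: "'g \<Rightarrow> 'h \<Rightarrow> 'h \<Rightarrow> 'h"
    and one :: "'g \<Rightarrow> 'h"
    and Dl :: "'g \<Rightarrow> 'g \<Rightarrow> 'h \<Rightarrow> ('h \<times> 'h) list"
    and eps :: "'h \<Rightarrow> 'k"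
    and S :: "'g \<Rightarrow> 'h \<Rightarrow> 'h"
    and pi :: "'g \<Rightarrow> 'g \<Rightarrow> 'h \<Rightarrow> 'h" +
  fixes scV :: "'k \<Rightarrow> 'v::ab_group_add \<Rightarrow> 'v"
    and act :: "'v \<Rightarrow> 'h \<Rightarrow> 'v"
    and rho :: "'g \<Rightarrow> 'v \<Rightarrow> ('v \<times> 'h) list"
    and p q :: 'g
  assumes vsV: "vector_space scV"
    and act_addv0: "\<forall>h\<in>Hc p. \<forall>v w. act (v + w) h = act v h + act w h"
    and act_scv0: "\<forall>h\<in>Hc p. \<forall>c v. act (scV c v) h = scV c (act v h)"
    and act_addh0: "\<forall>v. \<forall>x\<in>Hc p. \<forall>y\<in>Hc p. act v (x + y) = act v x + act v y"
    and act_sch0: "\<forall>v c. \<forall>x\<in>Hc p. act v (scH c x) = scV c (act v x)"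
    and act_one0: "\<forall>v. act v (one p) = v"
    and act_i: "\<forall>v. \<forall>h\<in>Hc 0.
       sum_list (map (\<lambda>(a, b). act (act v a) (S (- p) b)) (Dl p (- p) h)) = act v (epst scH mu one Dl eps p h) \<and>
       sum_list (map (\<lambda>(a, b). act (act v (S (- p) a)) b) (Dl (- p) p h)) = act v (epss scH mu one Dl eps p h)"
    and rho_tlin: "\<forall>r. tlin scV UNIV scV UNIV scH (Hc r) (rho r)"
    and rho_coas: "\<forall>r1 r2 v. teq3 scV UNIV scH (Hc r1) scH (Hc r2)
        [(a, b, c). (x, c) \<leftarrow> rho r2 v, (a, b) \<leftarrow> rho r1 x]
        [(a, b, c). (a, y) \<leftarrow> rho (r1 + r2) v, (b, c) \<leftarrow> Dl r1 r2 y]"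
    and rho_counit: "\<forall>v. sum_list (map (\<lambda>(a, b). scV (eps b) a) (rho 0 v)) = v"
    and rho_iii: "\<forall>v r. \<forall>h\<in>Hc p. teq2 scV UNIV scH (Hc r) (rho r (act v h))
        [(act a h2, mu r (S (- r) (pi (- p) (p + - r + - p) h1)) (mu r b h3)).
            (a, b) \<leftarrow> rho r v, (h1, h2, h3) \<leftarrow> delta3 Dl (p + - r + - p) p r h]"
    and rho_assoc: "\<forall>v r. \<forall>g\<in>Hc r. \<forall>l\<in>Hc r.
        teq2 scV UNIV scH (Hc r) [(a, mu r (mu r g l) b). (a, b) \<leftarrow> rho r v] [(a, mu r g (mu r l b)). (a, b) \<leftarrow> rho r v] \<and>
        teq2 scV UNIV scH (Hc r) [(a, mu r (mu r g b) l). (a, b) \<leftarrow> rho r v] [(a, mu r g (mu r b l)). (a, b) \<leftarrow> rho r v]"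

lemma YD_intro: "crossed_gcwhq scH Hc mu one Dl eps S pi \<Longrightarrow> ydwq scH Hc mu one Dl eps S pi scV p act rho \<Longrightarrow>
   YD scH Hc mu one Dl eps S pi scV act rho p"
  apply (rule YD.intro[OF HQ_intro], assumption)
  unfolding YD_axioms_def ydwq_def by (elim conjE) (intro conjI; assumption)

context YD
begin

sublocale vV: vector_space scV by (rule vsV)

lemma act_addv[simp]: "h \<in> Hc p \<Longrightarrow> act (v + w) h = act v h + act w h" using act_addv0 by blast
lemma act_scv[simp]: "h \<in> Hc p \<Longrightarrow> act (scV c v) h = scV c (act v h)" using act_scv0 by blast
lemma act_addh[simp]: "x \<in> Hc p \<Longrightarrow> y \<in> Hc p \<Longrightarrow> act v (x + y) = act v x + act v y" using act_addh0 by blast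
lemma act_sch[simp]: "x \<in> Hc p \<Longrightarrow> act v (scH c x) = scV c (act v x)" using act_sch0 by blast
lemma act_one[simp]: "act v (one p) = v" using act_one0 by blast

lemma rho_in: "(a, b) \<in> set (rho r v) \<Longrightarrow> b \<in> Hc r"
  using rho_tlin unfolding tlin_def by blast

abbreviation "p' \<equiv> q + p + - q"
abbreviation "act' \<equiv> (\<lambda>v h. act v (pi (- q) (q + p + - q) h))"
abbreviation "rho' \<equiv> (\<lambda>r v. map (\<lambda>(a, b). (a, pi q (- q + r + q) b)) (rho (- q + r + q) v))"

lemma C_i: "\<forall>v. \<forall>h\<in>Hc 0.
       sum_list (map (\<lambda>(a, b). act' (act' v a) (S (- p') b)) (Dl p' (- p') h)) = act' v (et p' h) \<and>
       sum_list (map (\<lambda>(a, b). act' (act' v (S (- p') a)) b) (Dl (- p') p' h)) = act' v (es p' h)"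
proof (intro allI ballI conjI)
  fix v h assume h: "h \<in> Hc 0"
  have m1: "a \<in> Hc p'" "b \<in> Hc (- p')" if "(a, b) \<in> set (Dl p' (- p') h)" for a b
    using Dl_in'[OF that h] by auto
  have "sum_list (map (\<lambda>(a, b). act' (act' v a) (S (- p') b)) (Dl p' (- p') h))
      = sum_list (map (\<lambda>(a, b). act (act v a) (S (- p) b)) (map (\<lambda>(a, b). (pi (- q) p' a, pi (- q) (- p') b)) (Dl p' (- p') h)))"
    unfolding sum2_map by (rule sum2_cong) (use m1 in \<open>simp\<close>)
  also have "\<dots> = sum_list (map (\<lambda>(a, b). act (act v a) (S (- p) b)) (Dl p (- p) (pi (- q) 0 h)))"
    by (rule teq2_vec[OF vsV pi_Dl[where h=h and s=0 and q=p' and r="- p'" and x="- q" and q'=p and r'="- p"]])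
       (use h in \<open>auto simp: lin_def\<close>)
  also have "\<dots> = act v (et p (pi (- q) 0 h))" using act_i h by simp
  also have "\<dots> = act' v (et p' h)" using h by (simp add: et_pi)
  finally show "sum_list (map (\<lambda>(a, b). act' (act' v a) (S (- p') b)) (Dl p' (- p') h)) = act' v (et p' h)" .
next
  fix v h assume h: "h \<in> Hc 0"
  have m1: "a \<in> Hc (- p')" "b \<in> Hc p'" if "(a, b) \<in> set (Dl (- p') p' h)" for a b
    using Dl_in'[OF that h] by auto
  have "sum_list (map (\<lambda>(a, b). act' (act' v (S (- p') a)) b) (Dl (- p') p' h))
      = sum_list (map (\<lambda>(a, b). act (act v (S (- p) a)) b) (map (\<lambda>(a, b). (pi (- q) (- p') a, pi (- q) p' b)) (Dl (- p') p' h)))"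
    unfolding sum2_map by (rule sum2_cong) (use m1 in \<open>simp\<close>)
  also have "\<dots> = sum_list (map (\<lambda>(a, b). act (act v (S (- p) a)) b) (Dl (- p) p (pi (- q) 0 h)))"
    by (rule teq2_vec[OF vsV pi_Dl[where h=h and s=0 and q="- p'" and r="p'" and x="- q" and q'="- p" and r'=p]])
       (use h in \<open>auto simp: lin_def\<close>)
  also have "\<dots> = act v (es p (pi (- q) 0 h))" using act_i h by simp
  also have "\<dots> = act' v (es p' h)" using h by (simp add: es_pi)
  finally show "sum_list (map (\<lambda>(a, b). act' (act' v (S (- p') a)) b) (Dl (- p') p' h)) = act' v (es p' h)" .
qed

lemma C_tlin: "tlin scV UNIV scV UNIV scH (Hc r) (rho' r)"
proof -
  let ?s = "- q + r + q"
  let ?g = "\<lambda>(a, b). (a, pi q ?s b)"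
  have T: "tlin scV UNIV scV UNIV scH (Hc ?s) (rho ?s)" using rho_tlin by blast
  have mem: "b \<in> Hc ?s" if "(a, b) \<in> set (rho ?s v)" for a b v using rho_in[OF that] .
  have linpi: "lin scH (Hc ?s) scH (pi q ?s)" by (simp add: lin_def)
  have tm: "teq2 scV UNIV scH (Hc r) (map ?g X) (map ?g Y)"
    if "teq2 scV UNIV scH (Hc ?s) X Y" for X Y
    unfolding teq2_def
  proof (intro allI impI)
    fix \<phi> :: "'v \<Rightarrow> 'h \<Rightarrow> 'k"
    assume "(\<forall>b\<in>Hc r. lin_fun scV UNIV (\<lambda>a. \<phi> a b)) \<and> (\<forall>a\<in>UNIV. lin_fun scH (Hc r) (\<phi> a))"
    then have l1: "\<forall>b\<in>Hc r. lin_fun scV UNIV (\<lambda>a. \<phi> a b)" and l2: "\<forall>a. lin_fun scH (Hc r) (\<phi> a)" by auto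
    have "sum_list (map (\<lambda>(a, b). \<phi> a (pi q ?s b)) X) = sum_list (map (\<lambda>(a, b). \<phi> a (pi q ?s b)) Y)"
      using that unfolding teq2_def
      apply (elim allE[where x="\<lambda>a b. \<phi> a (pi q ?s b)"])
      apply (erule mp)
      using l1 l2 by (auto simp: lin_fun_def)
    then show "sum_list (map (\<lambda>(a, b). \<phi> a b) (map ?g X)) = sum_list (map (\<lambda>(a, b). \<phi> a b) (map ?g Y))"
      using sum2_map[of \<phi> id "pi q ?s"] by (simp add: case_prod_unfold)
  qed
  show ?thesis unfolding tlin_def
  proof (intro conjI ballI allI)
    fix v show "set (rho' r v) \<subseteq> UNIV \<times> Hc r" using mem by auto
  next
    fix x y :: 'v
    have "teq2 scV UNIV scH (Hc ?s) (rho ?s (x + y)) (rho ?s x @ rho ?s y)" using T unfolding tlin_def by blast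
    from tm[OF this] show "teq2 scV UNIV scH (Hc r) (rho' r (x + y)) (rho' r x @ rho' r y)" by simp
  next
    fix c x
    have "teq2 scV UNIV scH (Hc ?s) (rho ?s (scV c x)) (map (\<lambda>(b, d). (scV c b, d)) (rho ?s x))"
      using T unfolding tlin_def by blast
    from tm[OF this] show "teq2 scV UNIV scH (Hc r) (rho' r (scV c x)) (map (\<lambda>(b, d). (scV c b, d)) (rho' r x))"
      by (simp add: case_prod_unfold comp_def)
  qed
qed

lemma C_coas: "teq3 scV UNIV scH (Hc r1) scH (Hc r2)
        [(a, b, c). (x, c) \<leftarrow> rho' r2 v, (a, b) \<leftarrow> rho' r1 x]
        [(a, b, c). (a, y) \<leftarrow> rho' (r1 + r2) v, (b, c) \<leftarrow> Dl r1 r2 y]"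
  unfolding teq3_def
proof (intro allI impI)
  let ?s1 = "- q + r1 + q" and ?s2 = "- q + r2 + q" and ?s = "- q + (r1 + r2) + q"
  fix \<phi> :: "'v \<Rightarrow> 'h \<Rightarrow> 'h \<Rightarrow> 'k"
  assume A: "(\<forall>b\<in>Hc r1. \<forall>c\<in>Hc r2. lin_fun scV UNIV (\<lambda>a. \<phi> a b c)) \<and> (\<forall>a\<in>UNIV. \<forall>c\<in>Hc r2. lin_fun scH (Hc r1) (\<lambda>b. \<phi> a b c)) \<and>
       (\<forall>a\<in>UNIV. \<forall>b\<in>Hc r1. lin_fun scH (Hc r2) (\<phi> a b))"
  have "sum_list (map (\<lambda>(a, b, c). \<phi> a b c) [(a, b, c). (x, c) \<leftarrow> rho' r2 v, (a, b) \<leftarrow> rho' r1 x])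
      = sum_list (map (\<lambda>(a, b, c). \<phi> a (pi q ?s1 b) (pi q ?s2 c)) [(a, b, c). (x, c) \<leftarrow> rho ?s2 v, (a, b) \<leftarrow> rho ?s1 x])"
    by (simp add: sum_list_concat_map map_concat comp_def case_prod_unfold)
  also have "\<dots> = sum_list (map (\<lambda>(a, b, c). \<phi> a (pi q ?s1 b) (pi q ?s2 c)) [(a, b, c). (a, y) \<leftarrow> rho (?s1 + ?s2) v, (b, c) \<leftarrow> Dl ?s1 ?s2 y])"
    using rho_coas[rule_format, of ?s1 ?s2 v] unfolding teq3_def
    apply (elim allE[where x="\<lambda>a b c. \<phi> a (pi q ?s1 b) (pi q ?s2 c)"])
    apply (erule mp)
    using A by (auto simp: lin_fun_def)
  also have "\<dots> = sum_list (map (\<lambda>(a, y). sum_list (map (\<lambda>(b, c). \<phi> a (pi q ?s1 b) (pi q ?s2 c)) (Dl ?s1 ?s2 y))) (rho (?s1 + ?s2) v))"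
    by (simp add: sum_list_concat_map map_concat comp_def case_prod_unfold)
  also have "\<dots> = sum_list (map (\<lambda>(a, y). sum_list (map (\<lambda>(b, c). \<phi> a b c) (Dl r1 r2 (pi q ?s y)))) (rho (?s1 + ?s2) v))"
  proof (rule sum2_cong)
    fix a y assume ay: "(a, y) \<in> set (rho (?s1 + ?s2) v)"
    have y: "y \<in> Hc (?s1 + ?s2)" using rho_in[OF ay] .
    have "sum_list (map (\<lambda>(b, c). \<phi> a b c) (map (\<lambda>(b, c). (pi q ?s1 b, pi q ?s2 c)) (Dl ?s1 ?s2 y)))
        = sum_list (map (\<lambda>(b, c). \<phi> a b c) (Dl r1 r2 (pi q ?s y)))"
      by (rule teq2_vec[OF vs_field pi_Dl[where h=y and s="?s" and q="?s1" and r="?s2" and x=q and q'=r1 and r'=r2]])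
         (use y A in \<open>auto simp: lin_def lin_fun_def\<close>)
    then show "sum_list (map (\<lambda>(b, c). \<phi> a (pi q ?s1 b) (pi q ?s2 c)) (Dl ?s1 ?s2 y))
        = sum_list (map (\<lambda>(b, c). \<phi> a b c) (Dl r1 r2 (pi q ?s y)))"
      by (simp only: sum2_map)
  qed
  also have "\<dots> = sum_list (map (\<lambda>(a, b, c). \<phi> a b c) [(a, b, c). (a, y) \<leftarrow> rho' (r1 + r2) v, (b, c) \<leftarrow> Dl r1 r2 y])"
    by (simp add: sum_list_concat_map map_concat comp_def case_prod_unfold)
  finally show "sum_list (map (\<lambda>(a, b, c). \<phi> a b c) [(a, b, c). (x, c) \<leftarrow> rho' r2 v, (a, b) \<leftarrow> rho' r1 x]) =
    sum_list (map (\<lambda>(a, b, c). \<phi> a b c) [(a, b, c). (a, y) \<leftarrow> rho' (r1 + r2) v, (b, c) \<leftarrow> Dl r1 r2 y])" .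
qed

lemma C_counit: "sum_list (map (\<lambda>(a, b). scV (eps b) a) (rho' 0 v)) = v"
proof -
  have e: "rho' 0 v = map (\<lambda>(a, b). (a, pi q 0 b)) (rho 0 v)" by simp
  have "sum_list (map (\<lambda>(a, b). scV (eps b) a) (rho' 0 v)) = sum_list (map (\<lambda>(a, b). scV (eps b) a) (rho 0 v))"
    unfolding e sum2_map2 by (rule sum2_cong) (simp add: rho_in)
  then show ?thesis using rho_counit by simp
qed

lemma tm_gen:
  assumes "teq2 scV UNIV scH (Hc s) X Y" and rs: "x + s + - x = r"
  shows "teq2 scV UNIV scH (Hc r) (map (\<lambda>(a, b). (a, pi x s b)) X) (map (\<lambda>(a, b). (a, pi x s b)) Y)"
  unfolding teq2_def
proof (intro allI impI)
  fix \<phi> :: "'v \<Rightarrow> 'h \<Rightarrow> 'k"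
  assume "(\<forall>b\<in>Hc r. lin_fun scV UNIV (\<lambda>a. \<phi> a b)) \<and> (\<forall>a\<in>UNIV. lin_fun scH (Hc r) (\<phi> a))"
  then have l1: "\<forall>b\<in>Hc r. lin_fun scV UNIV (\<lambda>a. \<phi> a b)" and l2: "\<forall>a. lin_fun scH (Hc r) (\<phi> a)" by auto
  have "sum_list (map (\<lambda>(a, b). \<phi> a (pi x s b)) X) = sum_list (map (\<lambda>(a, b). \<phi> a (pi x s b)) Y)"
    using assms(1) unfolding teq2_def
    apply (elim allE[where x="\<lambda>a b. \<phi> a (pi x s b)"])
    apply (erule mp)
    using l1 l2 rs by (auto simp: lin_fun_def)
  then show "sum_list (map (\<lambda>(a, b). \<phi> a b) (map (\<lambda>(a, b). (a, pi x s b)) X)) = sum_list (map (\<lambda>(a, b). \<phi> a b) (map (\<lambda>(a, b). (a, pi x s b)) Y))"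
    by (simp only: sum2_map2)
qed

lemma C_assoc: "g \<in> Hc r \<Longrightarrow> l \<in> Hc r \<Longrightarrow>
        teq2 scV UNIV scH (Hc r) [(a, mu r (mu r g l) b). (a, b) \<leftarrow> rho' r v] [(a, mu r g (mu r l b)). (a, b) \<leftarrow> rho' r v] \<and>
        teq2 scV UNIV scH (Hc r) [(a, mu r (mu r g b) l). (a, b) \<leftarrow> rho' r v] [(a, mu r g (mu r b l)). (a, b) \<leftarrow> rho' r v]"
proof -
  assume g: "g \<in> Hc r" and l: "l \<in> Hc r"
  let ?s = "- q + r + q"
  define g0 where "g0 = pi (- q) r g"
  define l0 where "l0 = pi (- q) r l"
  have g0: "g0 \<in> Hc ?s" "pi q ?s g0 = g" using g unfolding g0_def by simp_all
  have l0: "l0 \<in> Hc ?s" "pi q ?s l0 = l" using l unfolding l0_def by simp_all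
  have A: "teq2 scV UNIV scH (Hc ?s) [(a, mu ?s (mu ?s g0 l0) b). (a, b) \<leftarrow> rho ?s v] [(a, mu ?s g0 (mu ?s l0 b)). (a, b) \<leftarrow> rho ?s v] \<and>
        teq2 scV UNIV scH (Hc ?s) [(a, mu ?s (mu ?s g0 b) l0). (a, b) \<leftarrow> rho ?s v] [(a, mu ?s g0 (mu ?s b l0)). (a, b) \<leftarrow> rho ?s v]"
    using rho_assoc g0 l0 by blast
  have e: "map (\<lambda>(a, b). (a, F b)) (rho' r v) = map (\<lambda>(a, b). (a, pi q ?s b)) (map (\<lambda>(a, b). (a, F0 b)) (rho ?s v))"
    if "\<And>b. b \<in> Hc ?s \<Longrightarrow> F (pi q ?s b) = pi q ?s (F0 b)" for F F0
    using that rho_in[of _ _ ?s v] by (auto simp: case_prod_unfold)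
  have e1: "[(a, mu r (mu r g l) b). (a, b) \<leftarrow> rho' r v] = map (\<lambda>(a, b). (a, pi q ?s b)) [(a, mu ?s (mu ?s g0 l0) b). (a, b) \<leftarrow> rho ?s v]"
    by (rule e) (use g0 l0 in simp)
  have e2: "[(a, mu r g (mu r l b)). (a, b) \<leftarrow> rho' r v] = map (\<lambda>(a, b). (a, pi q ?s b)) [(a, mu ?s g0 (mu ?s l0 b)). (a, b) \<leftarrow> rho ?s v]"
    by (rule e) (use g0 l0 in simp)
  have e3: "[(a, mu r (mu r g b) l). (a, b) \<leftarrow> rho' r v] = map (\<lambda>(a, b). (a, pi q ?s b)) [(a, mu ?s (mu ?s g0 b) l0). (a, b) \<leftarrow> rho ?s v]"
    by (rule e) (use g0 l0 in simp)
  have e4: "[(a, mu r g (mu r b l)). (a, b) \<leftarrow> rho' r v] = map (\<lambda>(a, b). (a, pi q ?s b)) [(a, mu ?s g0 (mu ?s b l0)). (a, b) \<leftarrow> rho ?s v]"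
    by (rule e) (use g0 l0 in simp)
  show ?thesis unfolding e1 e2 e3 e4
    using tm_gen[OF conjunct1[OF A], where x=q and r=r] tm_gen[OF conjunct2[OF A], where x=q and r=r] by simp
qed

lemma C_iii:
  assumes h: "h \<in> Hc p'"
  shows "teq2 scV UNIV scH (Hc r) (rho' r (act' v h))
        [(act' a h2, mu r (S (- r) (pi (- p') (p' + - r + - p') h1)) (mu r b h3)).
            (a, b) \<leftarrow> rho' r v, (h1, h2, h3) \<leftarrow> delta3 Dl (p' + - r + - p') p' r h]"
  unfolding teq2_def
proof (intro allI impI)
  let ?s = "- q + r + q" and ?t' = "p' + - r + - p'"
  let ?t = "p + - ?s + - p"
  fix \<phi> :: "'v \<Rightarrow> 'h \<Rightarrow> 'k"
  assume "(\<forall>b\<in>Hc r. lin_fun scV UNIV (\<lambda>a. \<phi> a b)) \<and> (\<forall>a\<in>UNIV. lin_fun scH (Hc r) (\<phi> a))"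
  then have f1: "\<And>a1 a2 b. b \<in> Hc r \<Longrightarrow> \<phi> (a1 + a2) b = \<phi> a1 b + \<phi> a2 b"
    and f2: "\<And>a b1 b2. b1 \<in> Hc r \<Longrightarrow> b2 \<in> Hc r \<Longrightarrow> \<phi> a (b1 + b2) = \<phi> a b1 + \<phi> a b2"
    and f3: "\<And>c a b. b \<in> Hc r \<Longrightarrow> \<phi> (scV c a) b = c * \<phi> a b"
    and f4: "\<And>c a b. b \<in> Hc r \<Longrightarrow> \<phi> a (scH c b) = c * \<phi> a b"
    unfolding lin_fun_def by auto
  define h0 where "h0 = pi (- q) p' h"
  have h0: "h0 \<in> Hc p" using h unfolding h0_def by simp
  have hh: "pi q p h0 = h" using h unfolding h0_def by simp
  have RI: "teq2 scV UNIV scH (Hc ?s) (rho ?s (act v h0))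
        [(act a h2, mu ?s (S (- ?s) (pi (- p) (p + - ?s + - p) h1)) (mu ?s b h3)).
            (a, b) \<leftarrow> rho ?s v, (h1, h2, h3) \<leftarrow> delta3 Dl (p + - ?s + - p) p ?s h0]"
    using rho_iii h0 by blast
  have "sum_list (map (\<lambda>(a, b). \<phi> a b) (rho' r (act' v h)))
      = sum_list (map (\<lambda>(a, b). \<phi> a (pi q ?s b)) (rho ?s (act v h0)))"
    by (simp only: h0_def sum2_map2)
  also have "\<dots> = sum_list (map (\<lambda>(a, b). \<phi> a (pi q ?s b))
        [(act a h2, mu ?s (S (- ?s) (pi (- p) (p + - ?s + - p) h1)) (mu ?s b h3)).
            (a, b) \<leftarrow> rho ?s v, (h1, h2, h3) \<leftarrow> delta3 Dl (p + - ?s + - p) p ?s h0])"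
    using RI unfolding teq2_def
    apply (elim allE[where x="\<lambda>a b. \<phi> a (pi q ?s b)"])
    apply (erule mp)
    by (auto simp: lin_fun_def f1 f2 f3 f4)
  also have "\<dots> = sum_list (map (\<lambda>(a, b). sum_list (map (\<lambda>(k1, k2, k3).
        \<phi> (act a k2) (pi q ?s (mu ?s (S (- ?s) (pi (- p) ?t k1)) (mu ?s b k3)))) (delta3 Dl ?t p ?s h0))) (rho ?s v))"
    by (simp only: sum_list_concat_map map_concat map_map comp_def case_prod_unfold fst_conv snd_conv)
  also have "\<dots> = sum_list (map (\<lambda>(a, b). sum_list (map (\<lambda>(h1, h2, h3).
        \<phi> (act a (pi (- q) p' h2)) (mu r (S (- r) (pi (- p') ?t' h1)) (mu r (pi q ?s b) h3))) (delta3 Dl ?t' p' r h))) (rho ?s v))"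
  proof (rule sum2_cong)
    fix a b assume ab: "(a, b) \<in> set (rho ?s v)"
    have bS: "b \<in> Hc ?s" using rho_in[OF ab] .
    let ?G = "\<lambda>h1 h2 h3. \<phi> (act a (pi (- q) p' h2)) (mu r (S (- r) (pi (- p') ?t' h1)) (mu r (pi q ?s b) h3))"
    have D: "teq3 scH (Hc ?t') scH (Hc p') scH (Hc r) (delta3 Dl ?t' p' r (pi q p h0))
           (map (\<lambda>(a, b, c). (pi q ?t a, pi q p b, pi q ?s c)) (delta3 Dl ?t p ?s h0))"
      by (rule delta3_pi[OF h0]) simp_all
    have "sum_list (map (\<lambda>(h1, h2, h3). ?G h1 h2 h3) (delta3 Dl ?t' p' r h))
        = sum_list (map (\<lambda>(h1, h2, h3). ?G h1 h2 h3) (map (\<lambda>(a, b, c). (pi q ?t a, pi q p b, pi q ?s c)) (delta3 Dl ?t p ?s h0)))"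
      using D unfolding hh teq3_def
      apply (elim allE[where x="?G"])
      apply (erule mp)
      using bS by (auto simp: lin_fun_def f1 f2 f3 f4)
    also have "\<dots> = sum_list (map (\<lambda>(k1, k2, k3). ?G (pi q ?t k1) (pi q p k2) (pi q ?s k3)) (delta3 Dl ?t p ?s h0))"
      by (simp only: sum3_map)
    also have "\<dots> = sum_list (map (\<lambda>(k1, k2, k3).
        \<phi> (act a k2) (pi q ?s (mu ?s (S (- ?s) (pi (- p) ?t k1)) (mu ?s b k3)))) (delta3 Dl ?t p ?s h0))"
      apply (rule sum3_cong)
      subgoal premises prem for k1 k2 k3
      proof -
        have m: "k1 \<in> Hc ?t \<and> k2 \<in> Hc p \<and> k3 \<in> Hc ?s" by (rule delta3_in[OF prem h0]) simp
        then show ?thesis using bS by simp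
      qed
      done
    finally show "(\<lambda>a b. sum_list (map (\<lambda>(k1, k2, k3).
        \<phi> (act a k2) (pi q ?s (mu ?s (S (- ?s) (pi (- p) ?t k1)) (mu ?s b k3)))) (delta3 Dl ?t p ?s h0))) a b
      = (\<lambda>a b. sum_list (map (\<lambda>(h1, h2, h3). ?G h1 h2 h3) (delta3 Dl ?t' p' r h))) a b" by simp
  qed
  also have "\<dots> = sum_list (map (\<lambda>(a, b). \<phi> a b)
        [(act' a h2, mu r (S (- r) (pi (- p') (p' + - r + - p') h1)) (mu r b h3)).
            (a, b) \<leftarrow> rho' r v, (h1, h2, h3) \<leftarrow> delta3 Dl (p' + - r + - p') p' r h])"
    by (simp only: sum_list_concat_map map_concat map_map comp_def case_prod_unfold fst_conv snd_conv)
  finally show "sum_list (map (\<lambda>(a, b). \<phi> a b) (rho' r (act' v h))) = sum_list (map (\<lambda>(a, b). \<phi> a b)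
        [(act' a h2, mu r (S (- r) (pi (- p') (p' + - r + - p') h1)) (mu r b h3)).
            (a, b) \<leftarrow> rho' r v, (h1, h2, h3) \<leftarrow> delta3 Dl (p' + - r + - p') p' r h])" .
qed

lemma main: "ydwq scH Hc mu one Dl eps S pi scV (q + p + - q) act' rho'"
  unfolding ydwq_def
proof (intro conjI)
  show "vector_space scV" by (rule vsV)
  show "\<forall>v. \<forall>h\<in>Hc 0.
       sum_list (map (\<lambda>(a, b). act' (act' v a) (S (- p') b)) (Dl p' (- p') h)) = act' v (et p' h) \<and>
       sum_list (map (\<lambda>(a, b). act' (act' v (S (- p') a)) b) (Dl (- p') p' h)) = act' v (es p' h)"
    by (rule C_i)
  show "\<forall>r. tlin scV UNIV scV UNIV scH (Hc r) (rho' r)" using C_tlin by blast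
  show "\<forall>r1 r2 v. teq3 scV UNIV scH (Hc r1) scH (Hc r2)
        [(a, b, c). (x, c) \<leftarrow> rho' r2 v, (a, b) \<leftarrow> rho' r1 x]
        [(a, b, c). (a, y) \<leftarrow> rho' (r1 + r2) v, (b, c) \<leftarrow> Dl r1 r2 y]" using C_coas by blast
  show "\<forall>v. sum_list (map (\<lambda>(a, b). scV (eps b) a) (rho' 0 v)) = v" using C_counit by blast
  show "\<forall>v r. \<forall>h\<in>Hc p'. teq2 scV UNIV scH (Hc r) (rho' r (act' v h))
        [(act' a h2, mu r (S (- r) (pi (- p') (p' + - r + - p') h1)) (mu r b h3)).
            (a, b) \<leftarrow> rho' r v, (h1, h2, h3) \<leftarrow> delta3 Dl (p' + - r + - p') p' r h]" using C_iii by blast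
  show "\<forall>v r. \<forall>g\<in>Hc r. \<forall>l\<in>Hc r.
        teq2 scV UNIV scH (Hc r) [(a, mu r (mu r g l) b). (a, b) \<leftarrow> rho' r v] [(a, mu r g (mu r l b)). (a, b) \<leftarrow> rho' r v] \<and>
        teq2 scV UNIV scH (Hc r) [(a, mu r (mu r g b) l). (a, b) \<leftarrow> rho' r v] [(a, mu r g (mu r b l)). (a, b) \<leftarrow> rho' r v]"
    using C_assoc by blast
qed simp_all

end


theorem proposition4p6:
  fixes scH :: "'k::field \<Rightarrow> 'h::ab_group_add \<Rightarrow> 'h"
    and Hc :: "'g::group_add \<Rightarrow> 'h set"
    and mu :: "'g \<Rightarrow> 'h \<Rightarrow> 'h \<Rightarrow> 'h"
    and one :: "'g \<Rightarrow> 'h"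
    and Dl :: "'g \<Rightarrow> 'g \<Rightarrow> 'h \<Rightarrow> ('h \<times> 'h) list"
    and eps :: "'h \<Rightarrow> 'k"
    and S :: "'g \<Rightarrow> 'h \<Rightarrow> 'h"
    and pi :: "'g \<Rightarrow> 'g \<Rightarrow> 'h \<Rightarrow> 'h"
    and scV :: "'k \<Rightarrow> 'v::ab_group_add \<Rightarrow> 'v"
    and act :: "'v \<Rightarrow> 'h \<Rightarrow> 'v"
    and rho :: "'g \<Rightarrow> 'v \<Rightarrow> ('v \<times> 'h) list"
    and p q :: 'g
  assumes H: "crossed_gcwhq scH Hc mu one Dl eps S pi"
    and bij_S: "\<forall>r. bij_betw (S r) (Hc r) (Hc (- r))"
    and V: "ydwq scH Hc mu one Dl eps S pi scV p act rho"
  shows "ydwq scH Hc mu one Dl eps S pi scV (q + p + - q)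
           (\<lambda>v h. act v (pi (- q) (q + p + - q) h))
           (\<lambda>r v. map (\<lambda>(a, b). (a, pi q (- q + r + q) b)) (rho (- q + r + q) v))"
proof -
  interpret YD scH Hc mu one Dl eps S pi scV act rho p q
    by (rule YD_intro[OF H V])
  show ?thesis by (rule main)
qed

end
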